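(* Suppose that $(\breve L,W)$ is a marked complete reflection lattice which is rationally of Coxeter type. Then $(\breve L,W)$ is of Coxeter type.
   Context: A complete lattice is a finitely generated free $\mathbb{Z}_2$-module; $\mathbb{Q}\otimes\breve L$ is a $\mathbb{Q}_2$-vector space. A reflection is an automorphism conjugate in $GL(r,\mathbb{Q}_2)$ to $\mathrm{diag}(-1,1,\dots,1)$. A complete reflection lattice is $(\breve L,W)$ with $W\subset\mathrm{Aut}(\breve L)$ finite and generated by its reflections. A marking of a reflection $\sigma$ is an equivalence class of pairs $(b,\beta)$, $b\in\breve L$, $\beta:\breve L\to\mathbb{Z}_2$ with $\sigma(x)=x+\beta(x)b$, modulo $(b,\beta)\sim(ub,u^{-1}\beta)$ for units $u\in\mathbb{Z}_2$; $(\breve L,W)$ is marked if each reflection $\sigma\in W$ is given a marking $\{(b_\sigma,\beta_\sigma)\}$ with $\{(wb_\sigma,\beta_\sigma\circ w^{-1})\}=\{(b_{w\sigma w^{-1}},\beta_{w\sigma w^{-1}})\}$ for all $w\in W$. Analogously over $\mathbb{Z}$: a reflection lattice $(L,W)$ is a free abelian group of finite rank with a finite subgroup of $\mathrm{Aut}(L)$ generated by reflections (conjugate in $GL(r,\mathbb{Q})$ to $\mathrm{diag}(-1,1,\dots,1)$), marked via classes $\pm(b,\beta)$ with $\beta:L\to\mathbb{Z}$, satisfying the same compatibility; $(\mathbb{Z}_2\otimes L,W)$ is then a marked complete reflection lattice. $(\breve L,W)$ is of Coxeter type if it is isomorphic as a marked complete reflection lattice to $(\mathbb{Z}_2\otimes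 L,W)$ for some marked reflection lattice $(L,W)$; it is rationally of Coxeter type if there is a reflection lattice $(L,W)$ such that $(\mathbb{Q}\otimes\breve L,W)$ is isomorphic (as a $\mathbb{Q}_2$-representation of $W$) to $(\mathbb{Q}_2\otimes L,W)$. *)

theory Defs
  imports "HOL-Analysis.Finite_Cartesian_Product" "HOL-Computational_Algebra.Fraction_Field"
begin

section \<open>The 2-adic integers Z_2 (inverse limit of Z/2^n Z) and Q_2 = Frac(Z_2)\<close>


definition coh2 :: "(nat \<Rightarrow> int) \<Rightarrow> bool" where
  "coh2 f \<longleftrightarrow> (\<forall>n. f (Suc n) mod 2^n = f n mod 2^n)"

definition z2rel :: "(nat \<Rightarrow> int) \<Rightarrow> (nat \<Rightarrow> int) \<Rightarrow> bool" where
  "z2rel f g \<longleftrightarrow> coh2 f \<and> coh2 g \<and> (\<forall>n. f n mod 2^n = g n mod 2^n)"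

lemma z2rel_part_equivp: "part_equivp z2rel"
proof (rule part_equivpI)
  show "\<exists>x. z2rel x x" by (rule exI[of _ "\<lambda>_. 0"]) (simp add: z2rel_def coh2_def)
  show "symp z2rel" by (auto simp: symp_def z2rel_def)
  show "transp z2rel" by (auto simp: transp_def z2rel_def)
qed

quotient_type z2 = "nat \<Rightarrow> int" / partial: z2rel
  by (rule z2rel_part_equivp)

lemma coh2_add: "coh2 f \<Longrightarrow> coh2 g \<Longrightarrow> coh2 (\<lambda>n. f n + g n)"
  unfolding coh2_def by (metis mod_add_cong)
lemma coh2_mult: "coh2 f \<Longrightarrow> coh2 g \<Longrightarrow> coh2 (\<lambda>n. f n * g n)"
  unfolding coh2_def by (metis mod_mult_cong)
lemma coh2_uminus: "coh2 f \<Longrightarrow> coh2 (\<lambda>n. - f n)"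
  unfolding coh2_def by (metis mod_minus_cong)
lemma coh2_diff: "coh2 f \<Longrightarrow> coh2 g \<Longrightarrow> coh2 (\<lambda>n. f n - g n)"
  unfolding coh2_def by (metis mod_diff_cong)

instantiation z2 :: comm_ring_1
begin
lift_definition zero_z2 :: z2 is "\<lambda>_. 0" by (simp add: z2rel_def coh2_def)
lift_definition one_z2 :: z2 is "\<lambda>_. 1" by (simp add: z2rel_def coh2_def)
lift_definition plus_z2 :: "z2 \<Rightarrow> z2 \<Rightarrow> z2" is "\<lambda>f g n. f n + g n"
  by (auto simp: z2rel_def coh2_add intro: mod_add_cong)
lift_definition times_z2 :: "z2 \<Rightarrow> z2 \<Rightarrow> z2" is "\<lambda>f g n. f n * g n"
  by (auto simp: z2rel_def coh2_mult intro: mod_mult_cong)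
lift_definition uminus_z2 :: "z2 \<Rightarrow> z2" is "\<lambda>f n. - f n"
  by (auto simp: z2rel_def coh2_uminus intro: mod_minus_cong)
lift_definition minus_z2 :: "z2 \<Rightarrow> z2 \<Rightarrow> z2" is "\<lambda>f g n. f n - g n"
  by (auto simp: z2rel_def coh2_diff intro: mod_diff_cong)
lemma z2rel_eqI: "z2rel f f \<Longrightarrow> f = g \<Longrightarrow> z2rel f g" by simp
lemma z2rel_cohD: "z2rel f f \<Longrightarrow> coh2 f" by (simp add: z2rel_def)
lemma z2rel_cohI: "coh2 f \<Longrightarrow> z2rel f f" by (simp add: z2rel_def)
lemmas z2c = coh2_add coh2_mult coh2_diff coh2_uminus z2rel_cohD z2rel_cohI
instance
proof
  fix a b c :: z2
  show "a + b + c = a + (b + c)" by transfer (rule z2rel_eqI, simp add: z2c, simp add: algebra_simps)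
  show "a + b = b + a" by transfer (rule z2rel_eqI, simp add: z2c, simp add: algebra_simps)
  show "0 + a = a" by transfer (rule z2rel_eqI, simp add: z2c, simp add: algebra_simps)
  show "- a + a = 0" by transfer (simp add: z2rel_def coh2_def)
  show "a - b = a + - b" by transfer (rule z2rel_eqI, simp add: z2c, simp add: algebra_simps)
  show "a * b * c = a * (b * c)" by transfer (rule z2rel_eqI, simp add: z2c, simp add: algebra_simps)
  show "a * b = b * a" by transfer (rule z2rel_eqI, simp add: z2c, simp add: algebra_simps)
  show "1 * a = a" by transfer (rule z2rel_eqI, simp add: z2c, simp add: algebra_simps)
  show "(a + b) * c = a * c + b * c" by transfer (rule z2rel_eqI, simp add: z2c, simp add: algebra_simps)
  show "(0::z2) \<noteq> 1" by transfer (simp add: z2rel_def coh2_def, rule exI[of _ 1], simp)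
qed
end

lemma coh2_mono: assumes "coh2 f" "m \<le> n" shows "f n mod 2^m = f m mod 2^m"
  using assms(2)
proof (induction n rule: dec_induct)
  case (step n)
  have "f (Suc n) mod 2^m = (f (Suc n) mod 2^n) mod 2^m"
    using step(1) by (simp add: mod_mod_cancel le_imp_power_dvd)
  also have "\<dots> = (f n mod 2^n) mod 2^m" using assms(1) by (simp add: coh2_def)
  also have "\<dots> = f m mod 2^m" using step by (simp add: mod_mod_cancel le_imp_power_dvd)
  finally show ?case .
qed simp

lemma pow2_dvd_mult: "\<not> (2::int)^a dvd x \<Longrightarrow> \<not> 2^b dvd y \<Longrightarrow> \<not> 2^(a+b) dvd x*y"
proof (induction a arbitrary: x)
  case 0 then show ?case by simp
next
  case (Suc a)
  show ?case
  proof (cases "even x")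
    case True
    then obtain x' where x: "x = 2*x'" by blast
    have "\<not> 2^a dvd x'" using Suc.prems(1) x by simp
    from Suc.IH[OF this Suc.prems(2)] show ?thesis using x by (simp add: mult.assoc)
  next
    case False
    then have "coprime ((2::int)^(Suc a+b)) x" by simp
    show ?thesis
    proof
    assume "2^(Suc a+b) dvd x*y"
    with \<open>coprime ((2::int)^(Suc a+b)) x\<close> have "2^(Suc a+b) dvd y" by (simp add: coprime_dvd_mult_right_iff)
    then have "2^b dvd y" by (meson dvd_trans le_add2 le_imp_power_dvd)
    with Suc.prems(2) show False by simp
    qed
  qed
qed

instance z2 :: idom
proof
  fix a b :: z2
  show "a \<noteq> 0 \<Longrightarrow> b \<noteq> 0 \<Longrightarrow> a * b \<noteq> 0"
  proof (transfer)
    fix f g assume f: "z2rel f f" "\<not> z2rel f (\<lambda>_. 0)" and g: "z2rel g g" "\<not> z2rel g (\<lambda>_. 0)"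
    from f obtain p where p: "f p mod 2^p \<noteq> 0" by (auto simp: z2rel_def coh2_def)
    from g obtain q where q: "g q mod 2^q \<noteq> 0" by (auto simp: z2rel_def coh2_def)
    have cf: "coh2 f" and cg: "coh2 g" using f g by (auto simp: z2rel_def)
    have "f (p+q) mod 2^p = f p mod 2^p" by (rule coh2_mono[OF cf]) simp
    with p have 1: "\<not> 2^p dvd f (p+q)" by (auto simp: dvd_eq_mod_eq_0)
    have "g (p+q) mod 2^q = g q mod 2^q" by (rule coh2_mono[OF cg]) simp
    with q have 2: "\<not> 2^q dvd g (p+q)" by (auto simp: dvd_eq_mod_eq_0)
    from pow2_dvd_mult[OF 1 2] show "\<not> z2rel (\<lambda>n. f n * g n) (\<lambda>_. 0)"
      by (auto simp: z2rel_def dvd_eq_mod_eq_0)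
  qed
qed


type_synonym q2 = "z2 fract"

definition embQ2 :: "z2 \<Rightarrow> q2" where "embQ2 a = Fract a 1"

text \<open>A lattice of rank r = CARD('n) is modelled (up to isomorphism) as 'a^'n, its
  endomorphisms as matrices 'a^'n^'n acting by *v, linear forms as vectors via fdot.\<close>

definition vmap :: "('a \<Rightarrow> 'b) \<Rightarrow> 'a^'n \<Rightarrow> 'b^'n" where
  "vmap f x = (\<chi> i. f (x $ i))"

definition fdot :: "'a::semiring_1^'n \<Rightarrow> 'a^'n \<Rightarrow> 'a" where
  "fdot c x = (\<Sum>i\<in>UNIV. c $ i * x $ i)"

definition refl_conj :: "'k::field^'n^'n \<Rightarrow> bool" where
  "refl_conj A \<longleftrightarrow> (\<exists>P::'k^'n^'n. invertible P \<and>
     (\<exists>i0. P ** A ** matrix_inv P = (\<chi> i j. if i = j then (if i = i0 then -1 else 1) else 0)))"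

definition z2_reflection :: "z2^'n^'n \<Rightarrow> bool" where
  "z2_reflection s \<longleftrightarrow> invertible s \<and> refl_conj (map_matrix embQ2 s)"

definition int_reflection :: "int^'n^'n \<Rightarrow> bool" where
  "int_reflection s \<longleftrightarrow> invertible s \<and> refl_conj (map_matrix (of_int :: int \<Rightarrow> rat) s)"

inductive_set gen_grp :: "('a::semiring_1^'n^'n) set \<Rightarrow> ('a^'n^'n) set" for S where
  gen_one: "mat 1 \<in> gen_grp S"
| gen_base: "s \<in> S \<Longrightarrow> s \<in> gen_grp S"
| gen_mult: "x \<in> gen_grp S \<Longrightarrow> y \<in> gen_grp S \<Longrightarrow> x ** y \<in> gen_grp S"
| gen_inv: "x \<in> gen_grp S \<Longrightarrow> invertible x \<Longrightarrow> matrix_inv x \<in> gen_grp S"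

definition refl_group :: "(('a::semiring_1^'n^'n) \<Rightarrow> bool) \<Rightarrow> ('a^'n^'n) set \<Rightarrow> bool" where
  "refl_group R W \<longleftrightarrow> finite W \<and> (\<forall>w\<in>W. invertible w) \<and> mat 1 \<in> W \<and>
     (\<forall>x\<in>W. \<forall>y\<in>W. x ** y \<in> W) \<and> (\<forall>x\<in>W. matrix_inv x \<in> W) \<and>
     W = gen_grp {s \<in> W. R s}"

definition is_marking :: "'a::comm_ring_1^'n^'n \<Rightarrow> 'a^'n \<Rightarrow> 'a^'n \<Rightarrow> bool" where
  "is_marking s b \<beta> \<longleftrightarrow> (\<forall>x. s *v x = x + fdot \<beta> x *s b)"

definition mclass :: "'a::comm_ring_1^'n \<Rightarrow> 'a^'n \<Rightarrow> (('a^'n) \<times> ('a^'n)) set" where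
  "mclass b \<beta> = {(u *s b, v *s \<beta>) | u v. u * v = 1}"

definition marking_of :: "'a::comm_ring_1^'n^'n \<Rightarrow> (('a^'n) \<times> ('a^'n)) set \<Rightarrow> bool" where
  "marking_of s C \<longleftrightarrow> (\<exists>b \<beta>. is_marking s b \<beta> \<and> C = mclass b \<beta>)"

definition is_marked :: "(('a::comm_ring_1^'n^'n) \<Rightarrow> bool) \<Rightarrow> ('a^'n^'n) set
    \<Rightarrow> ('a^'n^'n \<Rightarrow> (('a^'n) \<times> ('a^'n)) set) \<Rightarrow> bool" where
  "is_marked R W mk \<longleftrightarrow> (\<forall>s\<in>W. R s \<longrightarrow> marking_of s (mk s)) \<and>
     (\<forall>w\<in>W. \<forall>s\<in>W. R s \<longrightarrow>
        (\<lambda>(b, \<beta>). (w *v b, \<beta> v* matrix_inv w)) ` mk s = mk (w ** s ** matrix_inv w))"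

text \<open>marking of Z_2 (x) L induced from a marking (class \<open>\<pm>(b,beta)\<close>) on L\<close>
definition ext_marking :: "((int^'n) \<times> (int^'n)) set \<Rightarrow> ((z2^'n) \<times> (z2^'n)) set" where
  "ext_marking C = {(u *s vmap of_int b, v *s vmap of_int \<beta>) | u v b \<beta>. u * v = 1 \<and> (b, \<beta>) \<in> C}"

definition coxeter_type :: "(z2^'n^'n) set \<Rightarrow> (z2^'n^'n \<Rightarrow> ((z2^'n) \<times> (z2^'n)) set) \<Rightarrow> bool" where
  "coxeter_type W mk \<longleftrightarrow>
    (\<exists>(W'::(int^'n^'n) set) mk'. refl_group int_reflection W' \<and> is_marked int_reflection W' mk' \<and>
      (\<exists>\<Phi>::z2^'n^'n. invertible \<Phi> \<and>
         (\<lambda>w. \<Phi> ** w ** matrix_inv \<Phi>) ` W = map_matrix of_int ` W' \<and>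
         (\<forall>s\<in>W. \<forall>s'\<in>W'. z2_reflection s \<longrightarrow> map_matrix of_int s' = \<Phi> ** s ** matrix_inv \<Phi> \<longrightarrow>
            (\<lambda>(b, \<beta>). (\<Phi> *v b, \<beta> v* matrix_inv \<Phi>)) ` mk s = ext_marking (mk' s'))))"

definition rationally_coxeter :: "(z2^'n^'n) set \<Rightarrow> bool" where
  "rationally_coxeter W \<longleftrightarrow>
    (\<exists>(W'::(int^'n^'n) set). refl_group int_reflection W' \<and>
      (\<exists>P::q2^'n^'n. invertible P \<and>
         (\<lambda>w. P ** map_matrix embQ2 w ** matrix_inv P) ` W = map_matrix (\<lambda>k. embQ2 (of_int k)) ` W'))"

end

theory Submission
  imports Defs "HOL-Analysis.Cartesian_Space"
begin

lift_definition zc :: "int \<Rightarrow> z2" is "\<lambda>k (_::nat). k"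
  by (simp add: z2rel_def coh2_def)

lemma zc_add: "zc (a + b) = zc a + zc b" by transfer (simp add: z2rel_def coh2_def)
lemma zc_mult: "zc (a * b) = zc a * zc b" by transfer (simp add: z2rel_def coh2_def)
lemma zc_uminus: "zc (- a) = - zc a" by transfer (simp add: z2rel_def coh2_def)
lemma zc_diff: "zc (a - b) = zc a - zc b" by transfer (simp add: z2rel_def coh2_def)
lemma zc_0: "zc 0 = 0" by transfer (simp add: z2rel_def coh2_def)
lemma zc_1: "zc 1 = 1" by transfer (simp add: z2rel_def coh2_def)

lemma of_int_zc: "(of_int k :: z2) = zc k"
proof (induction k rule: int_induct[where k=0])
  case base then show ?case by (simp add: zc_0)
next
  case (step1 i) then show ?case by (simp add: zc_add zc_1)
next
  case (step2 i) then show ?case by (simp add: zc_diff zc_1)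
qed

lemma int_eq_of_mod_pow: fixes a b :: int
  assumes "\<forall>n. a mod 2^n = b mod 2^n" shows "a = b"
proof (rule ccontr)
  assume ne: "a \<noteq> b"
  define n where "n = nat \<bar>a - b\<bar>"
  have "(2::int)^n dvd a - b" using assms by (simp add: mod_eq_dvd_iff)
  then have "\<bar>(2::int)^n\<bar> \<le> \<bar>a - b\<bar>" using ne by (intro dvd_imp_le_int) auto
  moreover have "int n < int (2^n)" using less_exp[of n] by (simp only: of_nat_less_iff)
  then have "int n < 2^n" by simp
  ultimately show False unfolding n_def by simp
qed

lemma zc_inj: "zc a = zc b \<Longrightarrow> a = b"
  by transfer (auto simp: z2rel_def intro: int_eq_of_mod_pow)

instance z2 :: ring_char_0
proof
  show "inj (of_nat :: nat \<Rightarrow> z2)"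
  proof (rule injI)
    fix x y assume "(of_nat x :: z2) = of_nat y"
    then have "(of_int (int x) :: z2) = of_int (int y)" by simp
    then show "x = y" by (simp add: of_int_zc) (drule zc_inj, simp)
  qed
qed

lemma z2_abs_eq: "z2rel f g \<Longrightarrow> abs_z2 f = abs_z2 g"
  by (rule Quotient_rel_abs[OF Quotient_z2])

lemma zc_abs: "zc k = abs_z2 (\<lambda>_. k)"
  by (simp add: zc_def)

lemma coh2_const: "coh2 (\<lambda>_. k)" by (simp add: coh2_def)

lemma mod_mult_cancel_pow: fixes x y :: int
  assumes "(2^N * x) mod 2^(n+N) = (2^N * y) mod 2^(n+N)"
  shows "x mod 2^n = y mod 2^n"
proof -
  have "(2::int)^(n+N) = 2^N * 2^n" by (simp add: power_add)
  with assms have "2^N * (x mod 2^n) = 2^N * (y mod 2^n)"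
    by (simp add: mod_mult_mult1)
  then show ?thesis by simp
qed

lemma z2_div_pow:
  assumes c: "coh2 f" and z: "f N mod 2^N = 0"
  shows "abs_z2 f = zc (2^N) * abs_z2 (\<lambda>n. f (n+N) div 2^N)"
proof -
  define g where "g = (\<lambda>n. f (n+N) div 2^N)"
  have dv: "(2::int)^N dvd f (n+N)" for n
  proof -
    have "f (n+N) mod 2^N = f N mod 2^N" by (rule coh2_mono[OF c]) simp
    with z show ?thesis by (simp add: dvd_eq_mod_eq_0)
  qed
  have fg: "f (n+N) = 2^N * g n" for n using dv[of n] unfolding g_def by simp
  have cg: "coh2 g"
    unfolding coh2_def
  proof
    fix n
    have "f (Suc n + N) mod 2^(n+N) = f (n+N) mod 2^(n+N)"
      using c unfolding coh2_def by (metis add_Suc)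
    then have "(2^N * g (Suc n)) mod 2^(n+N) = (2^N * g n) mod 2^(n+N)" by (simp add: fg[symmetric])
    then show "g (Suc n) mod 2^n = g n mod 2^n" by (rule mod_mult_cancel_pow)
  qed
  have "zc (2^N) * abs_z2 g = abs_z2 (\<lambda>n. 2^N * g n)"
    unfolding zc_abs by (subst times_z2.abs_eq) (auto simp: z2rel_def coh2_const cg)
  also have "\<dots> = abs_z2 f"
  proof (rule z2_abs_eq)
    have "coh2 (\<lambda>n. 2^N * g n)" using coh2_mult[OF coh2_const cg] by simp
    moreover have "(2^N * g n) mod 2^n = f n mod 2^n" for n
      using coh2_mono[OF c, of n "n+N"] by (simp add: fg[symmetric])
    ultimately show "z2rel (\<lambda>n. 2^N * g n) f" using c by (simp add: z2rel_def)
  qed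
  finally show ?thesis unfolding g_def by simp
qed

lemma z2_div_pow_conv:
  assumes c: "coh2 f" and e: "abs_z2 f = zc (2^N) * y"
  shows "f N mod 2^N = 0"
proof -
  obtain g where g: "z2rel g g" "y = abs_z2 g" by (induct y rule: z2.abs_induct) auto
  have "abs_z2 f = abs_z2 (\<lambda>n. 2^N * g n)"
    using e g unfolding zc_abs by (simp add: times_z2.abs_eq z2rel_def coh2_const)
  moreover have "z2rel (\<lambda>n. 2^N * g n) (\<lambda>n. 2^N * g n)"
    using coh2_mult[OF coh2_const, of g "2^N"] g by (simp add: z2rel_def)
  moreover have "z2rel f f" using c by (simp add: z2rel_def)
  ultimately have "z2rel f (\<lambda>n. 2^N * g n)"
    using Quotient_rel[OF Quotient_z2, of f "\<lambda>n. 2^N * g n"] by blast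
  then show ?thesis by (simp add: z2rel_def)
qed

lemma z2_rep: fixes x :: z2 obtains f where "coh2 f" "x = abs_z2 f"
  by (induct x rule: z2.abs_induct) (auto simp: z2rel_def)

definition z2unit :: "z2 \<Rightarrow> bool" where "z2unit u \<longleftrightarrow> (\<exists>v. u * v = 1)"

lemma odd_inverse_mod: fixes a :: int assumes "odd a"
  shows "\<exists>x. (a * x) mod 2^n = 1 mod 2^n"
proof -
  have "coprime a (2^n)" using assms by simp
  then have "gcd a (2^n) = 1" by simp
  from bezout_int[of a "2^n"] obtain u v where "u * a + v * 2^n = gcd a (2^n)" by blast
  then have "u * a + v * 2^n = 1" using \<open>gcd a (2^n) = 1\<close> by simp
  then have "a * u = 1 + (- v) * 2^n" by (simp add: algebra_simps)
  then have "(a * u) mod 2^n = (1 + (- v) * 2^n) mod 2^n" by simp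
  also have "\<dots> = 1 mod 2^n" by (simp only: mod_mult_self1)
  finally have "(a * u) mod 2^n = 1 mod 2^n" .
  then show ?thesis by blast
qed

lemma z2_odd_unit:
  assumes c: "coh2 f" and o: "odd (f 1)"
  shows "z2unit (abs_z2 f)"
proof -
  define g where "g n = (SOME x. (f n * x) mod 2^n = 1 mod (2::int)^n)" for n
  have oddn: "odd (f n)" if "n \<ge> 1" for n
  proof -
    have "f n mod 2^1 = f 1 mod 2^1" by (rule coh2_mono[OF c]) (use that in simp)
    with o show ?thesis by (simp add: odd_iff_mod_2_eq_one)
  qed
  have g: "(f n * g n) mod 2^n = 1 mod 2^n" for n
  proof (cases "n \<ge> 1")
    case True
    show ?thesis unfolding g_def by (rule someI_ex, rule odd_inverse_mod, rule oddn[OF True])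
  next
    case False then have "n = 0" by simp
    then show ?thesis by simp
  qed
  have cg: "coh2 g" unfolding coh2_def
  proof
    fix n
    show "g (Suc n) mod 2^n = g n mod 2^n"
    proof (cases "n \<ge> 1")
      case False then have "n = 0" by simp
      then show ?thesis by simp
    next
      case True
      have "(f (Suc n) * g (Suc n)) mod 2^n = 1 mod 2^n"
      proof -
        have "(f (Suc n) * g (Suc n)) mod 2^n = ((f (Suc n) * g (Suc n)) mod 2^(Suc n)) mod 2^n"
          by (simp add: mod_mod_cancel le_imp_power_dvd)
        also have "\<dots> = (1 mod 2^Suc n) mod 2^n" using g[of "Suc n"] by simp
        also have "\<dots> = 1 mod 2^n" by (simp add: mod_mod_cancel le_imp_power_dvd)
        finally show ?thesis .
      qed
      moreover have "f (Suc n) mod 2^n = f n mod 2^n" using c by (simp add: coh2_def)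
      ultimately have "(f n * g (Suc n)) mod 2^n = (f n * g n) mod 2^n"
        using g[of n] mod_mult_cong[of "f n" "2^n" "f (Suc n)" "g (Suc n)" "g (Suc n)"] by simp
      then have "(2::int)^n dvd f n * (g (Suc n) - g n)"
        by (simp add: mod_eq_dvd_iff right_diff_distrib)
      moreover have "coprime ((2::int)^n) (f n)" using oddn[OF True] by simp
      ultimately have "(2::int)^n dvd (g (Suc n) - g n)"
        by (simp add: coprime_dvd_mult_right_iff)
      then show ?thesis by (simp add: mod_eq_dvd_iff)
    qed
  qed
  have "abs_z2 f * abs_z2 g = abs_z2 (\<lambda>n. f n * g n)"
    by (rule times_z2.abs_eq) (auto simp: z2rel_def c cg)
  also have "\<dots> = 1"
    unfolding one_z2_def
    by (rule z2_abs_eq) (auto simp: z2rel_def coh2_mult[OF c cg] coh2_const g)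
  finally show ?thesis unfolding z2unit_def by blast
qed

lemma zc_pow: "zc (2^N) = 2^N"
  by (simp add: of_int_zc[symmetric])

lemma z2_dichotomy: "z2unit x \<or> (\<exists>y. x = 2 * y)"
proof -
  obtain f where c: "coh2 f" and x: "x = abs_z2 f" by (rule z2_rep)
  show ?thesis
  proof (cases "odd (f 1)")
    case True then show ?thesis using z2_odd_unit[OF c] x by simp
  next
    case False
    then have "f 1 mod 2^1 = 0" by simp
    from z2_div_pow[OF c this] show ?thesis using x zc_pow[of 1] by auto
  qed
qed

lemma two_not_unit: "\<not> z2unit 2"
proof
  assume "z2unit 2"
  then obtain v where v: "2 * v = (1::z2)" unfolding z2unit_def by blast
  obtain f where c: "coh2 f" and x: "(1::z2) = abs_z2 f" by (rule z2_rep)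
  have "abs_z2 f = zc (2^1) * v" using v x zc_pow[of 1] by simp
  from z2_div_pow_conv[OF c this] have f0: "f 1 mod 2 = 0" by simp
  have "abs_z2 f = abs_z2 (\<lambda>_. 1)" using x by (simp add: one_z2_def)
  moreover have "z2rel f f" "z2rel (\<lambda>_. 1) (\<lambda>_. 1)" using c by (simp_all add: z2rel_def coh2_const)
  ultimately have "z2rel f (\<lambda>_. 1)" using Quotient_rel[OF Quotient_z2, of f "\<lambda>_. 1"] by blast
  then have "f 1 mod 2^1 = 1 mod 2^1" unfolding z2rel_def by blast
  then have "f 1 mod 2 = 1 mod 2" by simp
  with f0 show False by simp
qed

lemma z2_zero_if_all_pow: fixes x :: z2 assumes "\<forall>N. \<exists>y. x = 2^N * y" shows "x = 0"
proof -
  obtain f where c: "coh2 f" and x: "x = abs_z2 f" by (rule z2_rep)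
  have "f N mod 2^N = 0" for N
    using assms z2_div_pow_conv[OF c, of N] x zc_pow[of N] by auto
  then have "z2rel f (\<lambda>_. 0)"
    using c by (simp add: z2rel_def coh2_const)
  then show ?thesis using x z2_abs_eq zero_z2_def by metis
qed

lemma z2_valuation: fixes x :: z2 assumes "x \<noteq> 0" shows "\<exists>e u. z2unit u \<and> x = 2^e * u"
proof -
  obtain N where N: "\<not> (\<exists>y. x = 2^N * y)" using z2_zero_if_all_pow assms by blast
  have "\<And>x. \<not> (\<exists>y. x = 2^N * y) \<Longrightarrow> \<exists>e u. z2unit u \<and> x = 2^e * (u::z2)"
  proof (induction N)
    case 0 then show ?case by simp
  next
    case (Suc N)
    show ?case
    proof (cases "z2unit x")
      case True then show ?thesis by (rule_tac x=0 in exI) auto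
    next
      case False
      then obtain y where y: "x = 2 * y" using z2_dichotomy by blast
      have "\<not> (\<exists>z. y = 2^N * z)" using Suc.prems y by (auto simp: mult.assoc)
      from Suc.IH[OF this] obtain e u where "z2unit u" "y = 2^e * u" by blast
      then show ?thesis using y by (rule_tac x="Suc e" in exI) (auto simp: mult.assoc)
    qed
  qed
  then show ?thesis using N by blast
qed

lemma z2_density: fixes x :: z2 shows "\<exists>k y. x = of_int k + 2^N * y"
proof -
  obtain f where c: "coh2 f" and x: "x = abs_z2 f" by (rule z2_rep)
  have c2: "coh2 (\<lambda>n. f n - f N)" by (rule coh2_diff[OF c coh2_const])
  have "(f N - f N) mod 2^N = 0" by simp
  from z2_div_pow[OF c2 this]
  obtain y where "abs_z2 (\<lambda>n. f n - f N) = 2^N * y" using zc_pow by metis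
  moreover have "abs_z2 (\<lambda>n. f n - f N) = x - zc (f N)"
    unfolding x zc_abs by (subst minus_z2.abs_eq) (auto simp: z2rel_def c coh2_const)
  ultimately show ?thesis by (metis of_int_zc diff_eq_eq add.commute)
qed

lemma z2_dvd_int: assumes "(of_int t :: z2) = 2^e * y" shows "(2::int)^e dvd t"
proof -
  have h: "zc t = zc (2^e) * y" using assms by (simp add: of_int_zc zc_pow)
  have "abs_z2 (\<lambda>_. t) = zc (2^e) * y" using h by (simp only: zc_abs[of t, symmetric])
  from z2_div_pow_conv[OF coh2_const this] show ?thesis by (simp add: dvd_eq_mod_eq_0)
qed


definition rhom :: "('a::comm_ring_1 \<Rightarrow> 'b::comm_ring_1) \<Rightarrow> bool" where
  "rhom f \<longleftrightarrow> (\<forall>x y. f (x + y) = f x + f y) \<and> (\<forall>x y. f (x * y) = f x * f y) \<and> f 0 = 0 \<and> f 1 = 1"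

lemma rhom_add: "rhom f \<Longrightarrow> f (x + y) = f x + f y" by (simp add: rhom_def)
lemma rhom_mult: "rhom f \<Longrightarrow> f (x * y) = f x * f y" by (simp add: rhom_def)
lemma rhom_0: "rhom f \<Longrightarrow> f 0 = 0" by (simp add: rhom_def)
lemma rhom_1: "rhom f \<Longrightarrow> f 1 = 1" by (simp add: rhom_def)
lemma rhom_uminus: assumes "rhom f" shows "f (- x) = - f x"
proof -
  have "f (- x) + f x = 0" using rhom_add[OF assms, of "-x" x] rhom_0[OF assms] by simp
  then show ?thesis by (simp add: eq_neg_iff_add_eq_0)
qed
lemma rhom_diff: assumes "rhom f" shows "f (x - y) = f x - f y"
  using rhom_add[OF assms, of x "-y"] rhom_uminus[OF assms, of y] by simp
lemma rhom_sum: "rhom f \<Longrightarrow> f (sum g S) = (\<Sum>x\<in>S. f (g x))"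
  by (induction S rule: infinite_finite_induct) (auto simp: rhom_0 rhom_add)
lemma rhom_numeral: assumes r: "rhom f" shows "f (numeral k) = numeral k"
proof (induction k)
  case One show ?case by (simp add: rhom_1[OF r])
next
  case (Bit0 k) show ?case by (simp only: numeral_Bit0 rhom_add[OF r] Bit0.IH)
next
  case (Bit1 k) show ?case by (simp only: numeral_Bit1 rhom_add[OF r] Bit1.IH rhom_1[OF r])
qed
lemma rhom_pow: "rhom f \<Longrightarrow> f (x ^ k) = f x ^ k"
  by (induction k) (auto simp: rhom_1 rhom_mult)

lemma rhom_of_int: "rhom (of_int :: int \<Rightarrow> 'a::comm_ring_1)" by (simp add: rhom_def)
lemma rhom_of_rat: "rhom (of_rat :: rat \<Rightarrow> 'a::field_char_0)" by (simp add: rhom_def of_rat_add of_rat_mult)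
lemma rhom_embQ2: "rhom embQ2" by (simp add: rhom_def embQ2_def Zero_fract_def One_fract_def)
lemma rhom_comp: "rhom f \<Longrightarrow> rhom g \<Longrightarrow> rhom (g \<circ> f)" by (simp add: rhom_def)

lemma inj_embQ2: "inj embQ2" by (rule injI) (simp add: embQ2_def eq_fract)

lemma vmap_nth[simp]: "vmap f x $ i = f (x $ i)" by (simp add: vmap_def)

lemma map_matrix_mult: "rhom f \<Longrightarrow> map_matrix f (A ** B) = map_matrix f A ** map_matrix f B"
  by (simp add: vec_eq_iff matrix_matrix_mult_def rhom_sum rhom_mult)
lemma map_matrix_mat: "rhom f \<Longrightarrow> map_matrix f (mat c) = mat (f c)"
  by (simp add: vec_eq_iff mat_def rhom_0)
lemma vmap_mv: "rhom f \<Longrightarrow> vmap f (A *v x) = map_matrix f A *v vmap f x"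
  by (simp add: vec_eq_iff matrix_vector_mult_def rhom_sum rhom_mult)
lemma vmap_vm: "rhom f \<Longrightarrow> vmap f (x v* A) = vmap f x v* map_matrix f A"
  by (simp add: vec_eq_iff vector_matrix_mult_def rhom_sum rhom_mult)
lemma fdot_hom: "rhom f \<Longrightarrow> f (fdot a b) = fdot (vmap f a) (vmap f b)"
  by (simp add: fdot_def rhom_sum rhom_mult)
lemma vmap_add: "rhom f \<Longrightarrow> vmap f (x + y) = vmap f x + vmap f y"
  by (simp add: vec_eq_iff rhom_add)
lemma vmap_diff: "rhom f \<Longrightarrow> vmap f (x - y) = vmap f x - vmap f y"
  by (simp add: vec_eq_iff rhom_diff)
lemma vmap_scale: "rhom f \<Longrightarrow> vmap f (c *s x) = f c *s vmap f x"
  by (simp add: vec_eq_iff rhom_mult)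
lemma vmap_0: "rhom f \<Longrightarrow> vmap f 0 = 0"
  by (simp add: vec_eq_iff rhom_0)
lemma map_matrix_add: "rhom f \<Longrightarrow> map_matrix f (A + B) = map_matrix f A + map_matrix f B"
  by (simp add: vec_eq_iff rhom_add)
lemma map_matrix_comp: "map_matrix g (map_matrix f A) = map_matrix (g \<circ> f) A"
  by (simp add: vec_eq_iff)
lemma vmap_comp: "vmap g (vmap f A) = vmap (g \<circ> f) A"
  by (simp add: vec_eq_iff)

lemma map_matrix_inj: "inj f \<Longrightarrow> map_matrix f A = map_matrix f B \<Longrightarrow> A = B"
  by (simp add: vec_eq_iff inj_eq)
lemma vmap_inj: "inj f \<Longrightarrow> vmap f A = vmap f B \<Longrightarrow> A = B"
  by (simp add: vec_eq_iff inj_eq)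

lemma inv_unique: fixes A :: "'a::semiring_1^'n^'n"
  assumes "A ** B = mat 1" "B ** A = mat 1" shows "matrix_inv A = B"
proof -
  have ex: "\<exists>A'. A ** A' = mat 1 \<and> A' ** A = mat 1" using assms by blast
  define C where "C = matrix_inv A"
  have C: "A ** C = mat 1 \<and> C ** A = mat 1" unfolding C_def matrix_inv_def by (rule someI_ex[OF ex])
  have "C = C ** (A ** B)" using assms by simp
  also have "\<dots> = (C ** A) ** B" by (simp add: matrix_mul_assoc)
  also have "\<dots> = B" using C by simp
  finally show ?thesis unfolding C_def .
qed

lemma inv_props: fixes A :: "'a::semiring_1^'n^'n"
  assumes "invertible A" shows "A ** matrix_inv A = mat 1" "matrix_inv A ** A = mat 1"
proof -
  have ex: "\<exists>A'. A ** A' = mat 1 \<and> A' ** A = mat 1" using assms by (simp add: invertible_def)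
  show "A ** matrix_inv A = mat 1" "matrix_inv A ** A = mat 1"
    unfolding matrix_inv_def using someI_ex[OF ex] by auto
qed

lemma map_inv: fixes A :: "'a::comm_ring_1^'n^'n"
  assumes f: "rhom f" and A: "invertible A"
  shows "invertible (map_matrix f A)" "matrix_inv (map_matrix f A) = map_matrix f (matrix_inv A)"
proof -
  have 1: "map_matrix f A ** map_matrix f (matrix_inv A) = mat 1"
    using inv_props[OF A] by (simp add: map_matrix_mult[OF f, symmetric] map_matrix_mat[OF f] rhom_1[OF f])
  have 2: "map_matrix f (matrix_inv A) ** map_matrix f A = mat 1"
    using inv_props[OF A] by (simp add: map_matrix_mult[OF f, symmetric] map_matrix_mat[OF f] rhom_1[OF f])
  show "invertible (map_matrix f A)" using 1 2 invertible_def by blast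
  show "matrix_inv (map_matrix f A) = map_matrix f (matrix_inv A)" by (rule inv_unique[OF 1 2])
qed

lemma invertible_inv: "invertible (A::'a::semiring_1^'n^'n) \<Longrightarrow> invertible (matrix_inv A)"
  using inv_props invertible_def by blast

lemma inv_mult_aux: fixes A B :: "'a::semiring_1^'n^'n"
  assumes a: "invertible A" "invertible B"
  shows "A ** B ** (matrix_inv B ** matrix_inv A) = mat 1" "matrix_inv B ** matrix_inv A ** (A ** B) = mat 1"
proof -
  have "A ** B ** (matrix_inv B ** matrix_inv A) = A ** ((B ** matrix_inv B) ** matrix_inv A)"
    by (simp only: matrix_mul_assoc)
  also have "\<dots> = mat 1" using inv_props[OF a(1)] inv_props[OF a(2)] by simp
  finally show "A ** B ** (matrix_inv B ** matrix_inv A) = mat 1" .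
  have "matrix_inv B ** matrix_inv A ** (A ** B) = matrix_inv B ** ((matrix_inv A ** A) ** B)"
    by (simp only: matrix_mul_assoc)
  also have "\<dots> = mat 1" using inv_props[OF a(1)] inv_props[OF a(2)] by simp
  finally show "matrix_inv B ** matrix_inv A ** (A ** B) = mat 1" .
qed

lemma invertible_mult': fixes A B :: "'a::semiring_1^'n^'n"
  assumes "invertible A" "invertible B" shows "invertible (A ** B)"
  unfolding invertible_def using inv_mult_aux[OF assms] by blast

lemma matrix_inv_mult: fixes A B :: "'a::semiring_1^'n^'n"
  assumes "invertible A" "invertible B" shows "matrix_inv (A ** B) = matrix_inv B ** matrix_inv A"
  using inv_mult_aux[OF assms] by (rule inv_unique)

lemma ifz: "(if P then c else 0) * (y::'a::semiring_0) = (if P then c * y else 0)" by simp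
lemma mat_entry: "mat c ** A = (\<chi> i j. (c::'a::comm_semiring_1) * A $ i $ j)"
  by (simp add: vec_eq_iff matrix_matrix_mult_def mat_def ifz)
lemma mat_mult_mat: "mat (a::'a::comm_semiring_1) ** mat b = mat (a * b)"
  unfolding mat_entry by (simp add: vec_eq_iff mat_def)
lemma mat_mv: "mat (c::'a::comm_semiring_1) *v x = c *s x"
  by (simp add: vec_eq_iff matrix_vector_mult_def mat_def ifz)

lemma entry_mat: "A ** mat c = (\<chi> i j. A $ i $ j * (c::'a::comm_semiring_1))"
  by (simp add: vec_eq_iff matrix_matrix_mult_def mat_def if_distrib sum.delta' cong: if_cong)
lemma mat_comm: "mat (c::'a::comm_semiring_1) ** A = A ** mat c"
  unfolding mat_entry entry_mat by (simp add: mult.commute)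

lemma mat_cancel: fixes X Y :: "'a::idom^'n^'m"
  assumes "mat c ** X = mat c ** Y" "c \<noteq> 0" shows "X = Y"
  using assms by (simp add: mat_entry vec_eq_iff)

lemma fdot_vm: "fdot (\<beta> v* A) x = fdot \<beta> (A *v (x::'a::comm_semiring_1^'n))"
  unfolding fdot_def vector_matrix_mult_def matrix_vector_mult_def
  by (simp add: sum_distrib_left sum_distrib_right mult.assoc mult.left_commute) (rule sum.swap)

lemma fdot_add: "fdot b (x + y) = fdot b x + fdot b (y::'a::comm_semiring_1^'n)"
  by (simp add: fdot_def distrib_left sum.distrib)
lemma fdot_scale: "fdot b (c *s x) = c * fdot b (x::'a::comm_semiring_1^'n)"
  by (simp add: fdot_def sum_distrib_left mult.left_commute)
lemma fdot_scale_l: "fdot (c *s b) x = c * fdot b (x::'a::comm_semiring_1^'n)"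
  by (simp add: fdot_def sum_distrib_left mult.assoc)
lemma fdot_0: "fdot b 0 = (0::'a::comm_semiring_1)"
  by (simp add: fdot_def)


definition outer :: "'a::comm_semiring_1^'n \<Rightarrow> 'a^'n \<Rightarrow> 'a^'n^'n" where
  "outer b \<beta> = (\<chi> i j. b $ i * \<beta> $ j)"

lemma outer_mv: "outer b \<beta> *v x = fdot \<beta> x *s b"
  by (simp add: vec_eq_iff outer_def matrix_vector_mult_def fdot_def sum_distrib_left sum_distrib_right mult_ac)

lemma mv_scale: "A *v (c *s x) = c *s (A *v (x::'a::comm_semiring_1^'n))"
  by (simp add: vec_eq_iff matrix_vector_mult_def sum_distrib_left mult.left_commute)

lemma is_marking_outer: "is_marking s b \<beta> \<longleftrightarrow> s = mat 1 + outer b \<beta>"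
  unfolding is_marking_def by (simp add: matrix_eq matrix_vector_mult_add_rdistrib outer_mv)

definition AR :: "'a::comm_ring_1^'n^'n \<Rightarrow> bool" where
  "AR A \<longleftrightarrow> (\<exists>b \<beta>. A = mat 1 + outer b \<beta> \<and> fdot \<beta> b = -2)"

lemma map_outer: "rhom f \<Longrightarrow> map_matrix f (outer b \<beta>) = outer (vmap f b) (vmap f \<beta>)"
  by (simp add: vec_eq_iff outer_def rhom_mult)

lemma AR_hom: assumes f: "rhom f" and A: "AR A" shows "AR (map_matrix f A)"
proof -
  obtain b \<beta> where A: "A = mat 1 + outer b \<beta>" "fdot \<beta> b = -2" using A unfolding AR_def by blast
  have "map_matrix f A = mat 1 + outer (vmap f b) (vmap f \<beta>)"
    using A by (simp add: map_matrix_add[OF f] map_matrix_mat[OF f] rhom_1[OF f] map_outer[OF f])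
  moreover have "fdot (vmap f \<beta>) (vmap f b) = -2"
    using A fdot_hom[OF f, of \<beta> b] by (simp add: rhom_uminus[OF f] rhom_numeral[OF f])
  ultimately show ?thesis unfolding AR_def by blast
qed

lemma AR_conj: fixes A X :: "'a::comm_ring_1^'n^'n"
  assumes A: "AR A" and X: "invertible X" shows "AR (X ** A ** matrix_inv X)"
proof -
  obtain b \<beta> where A: "A = mat 1 + outer b \<beta>" "fdot \<beta> b = -2" using A unfolding AR_def by blast
  define b' where "b' = X *v b"
  define \<beta>' where "\<beta>' = \<beta> v* matrix_inv X"
  have "(X ** A ** matrix_inv X) *v x = (mat 1 + outer b' \<beta>') *v x" for x
  proof -
    have "(X ** A ** matrix_inv X) *v x = X *v (A *v (matrix_inv X *v x))"
      by (simp add: matrix_vector_mul_assoc matrix_mul_assoc)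
    also have "\<dots> = X *v (matrix_inv X *v x) + fdot \<beta> (matrix_inv X *v x) *s (X *v b)"
      using A by (simp add: matrix_vector_mult_add_rdistrib outer_mv matrix_vector_right_distrib mv_scale)
    also have "\<dots> = x + fdot \<beta>' x *s b'"
      unfolding b'_def \<beta>'_def fdot_vm by (simp add: matrix_vector_mul_assoc inv_props[OF X])
    finally show ?thesis by (simp add: matrix_vector_mult_add_rdistrib outer_mv)
  qed
  then have "X ** A ** matrix_inv X = mat 1 + outer b' \<beta>'" by (simp add: matrix_eq)
  moreover have "fdot \<beta>' b' = -2"
    unfolding b'_def \<beta>'_def fdot_vm by (simp add: matrix_vector_mul_assoc inv_props[OF X] A)
  ultimately show ?thesis unfolding AR_def by blast
qed

definition Dm :: "'n \<Rightarrow> 'a::comm_ring_1^'n^'n" where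
  "Dm i0 = (\<chi> i j. if i = j then (if i = i0 then -1 else 1) else 0)"

lemma Dm_mv: "Dm i0 *v y = y - (2 * y $ i0) *s axis i0 (1::'a::comm_ring_1)"
  by (simp add: vec_eq_iff Dm_def matrix_vector_mult_def axis_def ifz)

lemma refl_conj_AR: fixes A :: "'a::field^'n^'n"
  assumes "refl_conj A" shows "AR A"
proof -
  obtain P :: "'a^'n^'n" where P: "invertible P" and
    "\<exists>i0. P ** A ** matrix_inv P = (\<chi> i j. if i = j then (if i = i0 then -1 else 1) else 0)"
    using assms unfolding refl_conj_def by blast
  then obtain i0 where "P ** A ** matrix_inv P = (\<chi> i j. if i = j then (if i = i0 then -1 else 1) else 0)"
    by blast
  then have E: "P ** A ** matrix_inv P = Dm i0" unfolding Dm_def .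
  define Pi where "Pi = matrix_inv P"
  have PP: "P ** Pi = mat 1" "Pi ** P = mat 1" using inv_props[OF P] unfolding Pi_def by auto
  have "A = Pi ** (P ** A ** Pi) ** P"
  proof -
    have "Pi ** (P ** A ** Pi) ** P = (Pi ** P) ** A ** (Pi ** P)" by (simp add: matrix_mul_assoc)
    then show ?thesis using PP by simp
  qed
  then have AD: "A = Pi ** Dm i0 ** P" using E unfolding Pi_def by simp
  define b where "b = Pi *v axis i0 1"
  define \<beta> where "\<beta> = (\<chi> j. -2 * P $ i0 $ j)"
  have fb: "fdot \<beta> x = -2 * (P *v x) $ i0" for x
    by (simp add: \<beta>_def fdot_def matrix_vector_mult_def sum_distrib_left mult.assoc)
  have "A *v x = (mat 1 + outer b \<beta>) *v x" for x
  proof -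
    have "A *v x = Pi *v (Dm i0 *v (P *v x))" using AD by (simp add: matrix_vector_mul_assoc matrix_mul_assoc)
    also have "\<dots> = Pi *v (P *v x) - (2 * (P *v x) $ i0) *s b"
      unfolding Dm_mv b_def by (simp add: matrix_vector_mult_diff_distrib mv_scale)
    also have "\<dots> = x + fdot \<beta> x *s b" using PP by (simp add: matrix_vector_mul_assoc fb)
    finally show ?thesis by (simp add: matrix_vector_mult_add_rdistrib outer_mv)
  qed
  then have "A = mat 1 + outer b \<beta>" by (simp add: matrix_eq)
  moreover have "fdot \<beta> b = -2" using PP unfolding fb b_def by (simp add: matrix_vector_mul_assoc axis_def)
  ultimately show ?thesis unfolding AR_def by blast
qed

lemma AR_refl_conj: fixes A :: "'a::field^'n^'n"
  assumes "AR A" and two: "(2::'a) \<noteq> 0" shows "refl_conj A"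
proof -
  obtain b \<beta> where A: "A = mat 1 + outer b \<beta>" and fb: "fdot \<beta> b = -2" using assms unfolding AR_def by blast
  have "b \<noteq> 0" using fb two by (auto simp: fdot_0)
  then obtain i0 where bi0: "b $ i0 \<noteq> 0" by (auto simp: vec_eq_iff)
  define P where "P = (\<chi> k j. if k = i0 then - \<beta> $ j / 2 else (if k = j then 1 else 0) - (if j = i0 then b $ k / b $ i0 else 0))"
  have Pmv: "P *v x = (\<chi> k. if k = i0 then - fdot \<beta> x / 2 else x $ k - b $ k / b $ i0 * x $ i0)" for x
  proof -
    have "(P *v x) $ k = (if k = i0 then - fdot \<beta> x / 2 else x $ k - b $ k / b $ i0 * x $ i0)" for k
    proof (cases "k = i0")
      case True then show ?thesis
        by (simp add: P_def matrix_vector_mult_def fdot_def sum_divide_distrib sum_negf)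
    next
      case False then show ?thesis
        by (simp add: P_def matrix_vector_mult_def left_diff_distrib sum_subtractf ifz)
    qed
    then show ?thesis by (simp add: vec_eq_iff)
  qed
  have Pb: "P *v b = axis i0 1"
    using bi0 two unfolding Pmv by (simp add: vec_eq_iff axis_def fb)
  have inj: "x = 0" if "P *v x = 0" for x
  proof -
    have c: "(if k = i0 then - fdot \<beta> x / 2 else x $ k - b $ k / b $ i0 * x $ i0) = 0" for k
      using that unfolding Pmv by (simp add: vec_eq_iff)
    have xb: "x = (x $ i0 / b $ i0) *s b"
    proof -
      have h: "x $ k = x $ i0 / b $ i0 * b $ k" for k
      proof (cases "k = i0")
        case True then show ?thesis using bi0 by simp
      next
        case False
        then have "x $ k = b $ k / b $ i0 * x $ i0" using c[of k] by simp
        then show ?thesis by simp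
      qed
      show ?thesis
      proof (rule vec_eq_iff[THEN iffD2], rule allI)
        fix k show "x $ k = ((x $ i0 / b $ i0) *s b) $ k" using h[of k] by (simp only: vector_smult_component)
      qed
    qed
    have "fdot \<beta> x = x $ i0 / b $ i0 * (-2)" by (subst xb) (simp add: fdot_scale fb)
    moreover have "- fdot \<beta> x / 2 = 0" using c[of i0] by simp
    then have "fdot \<beta> x = 0" using two by (simp add: divide_eq_0_iff)
    ultimately have "x $ i0 / b $ i0 * (-2) = 0" by simp
    then have "x $ i0 / b $ i0 = 0" using two by (simp only: mult_eq_0_iff neg_equal_0_iff_equal) simp
    then show "x = 0" by (subst xb) simp
  qed
  have Pinv: "invertible P"
    using inj invertible_left_inverse matrix_left_invertible_ker by blast
  have "(P ** A) *v x = (Dm i0 ** P) *v x" for x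
  proof -
    have "(P ** A) *v x = P *v x + fdot \<beta> x *s axis i0 1"
      unfolding A matrix_vector_mul_assoc[symmetric]
      by (simp add: matrix_vector_mult_add_rdistrib outer_mv matrix_vector_right_distrib mv_scale Pb)
    also have "\<dots> = Dm i0 *v (P *v x)"
      unfolding Dm_mv using two by (simp add: Pmv)
    finally show ?thesis by (simp add: matrix_vector_mul_assoc)
  qed
  then have PA: "P ** A = Dm i0 ** P" by (simp add: matrix_eq)
  have "P ** A ** matrix_inv P = Dm i0"
    using PA inv_props[OF Pinv] by (metis matrix_mul_assoc matrix_mul_rid)
  then show ?thesis unfolding refl_conj_def Dm_def using Pinv by blast
qed

lemma refl_conj_iff_AR: "(2::'a::field) \<noteq> 0 \<Longrightarrow> refl_conj (A::'a^'n^'n) \<longleftrightarrow> AR A"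
  using refl_conj_AR AR_refl_conj by blast


instance fract :: ("{idom,ring_char_0}") field_char_0
proof
  show "inj (of_nat :: nat \<Rightarrow> 'a fract)"
    by (rule injI) (simp add: of_nat_fract eq_fract)
qed

lemma rhom_of_int_eq: fixes f :: "'a::comm_ring_1 \<Rightarrow> 'b::comm_ring_1"
  assumes f: "rhom f" shows "f (of_int k) = of_int k"
proof (induction k rule: int_induct[where k=0])
  case base then show ?case by (simp add: rhom_0[OF f])
next
  case (step1 i) then show ?case by (simp add: rhom_add[OF f] rhom_1[OF f])
next
  case (step2 i) then show ?case by (simp add: rhom_diff[OF f] rhom_1[OF f])
qed

lemma embQ2_of_int: "embQ2 (of_int k) = of_int k"
  by (rule rhom_of_int_eq[OF rhom_embQ2])

lemma embQ2_of_int_comp: "(\<lambda>k. embQ2 (of_int k)) = of_int"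
  by (simp add: embQ2_of_int fun_eq_iff)

lemma q2_elem: obtains a b where "b \<noteq> 0" "(x::q2) = Fract a b"
  by (cases x) auto

lemma embQ2_mult_Fract: "embQ2 (d * b) * Fract a b = embQ2 (d * a)" if "b \<noteq> 0"
  using that by (simp add: embQ2_def eq_fract)

lemma fin_denom: fixes S :: "q2 set" assumes "finite S"
  shows "\<exists>d. d \<noteq> 0 \<and> (\<forall>x\<in>S. \<exists>a. embQ2 d * x = embQ2 a)"
  using assms
proof (induction S rule: finite_induct)
  case empty then show ?case by (rule_tac x=1 in exI) simp
next
  case (insert x S)
  then obtain d where d: "d \<noteq> 0" "\<forall>y\<in>S. \<exists>a. embQ2 d * y = embQ2 a" by blast
  obtain a b where ab: "b \<noteq> 0" "x = Fract a b" by (rule q2_elem)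
  have "embQ2 (d * b) * x = embQ2 (d * a)" using ab embQ2_mult_Fract by simp
  moreover have "\<exists>a. embQ2 (d * b) * y = embQ2 a" if yS: "y \<in> S" for y
  proof -
    obtain a' where "embQ2 d * y = embQ2 a'" using bspec[OF d(2) yS] by (elim exE)
    moreover have "embQ2 (d * b) * y = embQ2 b * (embQ2 d * y)"
      unfolding rhom_mult[OF rhom_embQ2] by algebra
    ultimately have "embQ2 (d * b) * y = embQ2 (b * a')"
      unfolding rhom_mult[OF rhom_embQ2] by simp
    then show ?thesis by blast
  qed
  ultimately show ?case using d ab by (rule_tac x="d * b" in exI) auto
qed

lemma matrix_denom: fixes X :: "q2^'n^'m"
  shows "\<exists>d A. d \<noteq> 0 \<and> map_matrix embQ2 A = mat (embQ2 d) ** X"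
proof -
  have "finite {X $ i $ j | i j. True}"
  proof -
    have "{X $ i $ j | i j. True} = (\<lambda>(i, j). X $ i $ j) ` UNIV" by auto
    then show ?thesis by simp
  qed
  from fin_denom[OF this] obtain d where d: "d \<noteq> 0" "\<forall>i j. \<exists>a. embQ2 d * X $ i $ j = embQ2 a" by blast
  define A where "A = (\<chi> i j. SOME a. embQ2 d * X $ i $ j = embQ2 a)"
  have "map_matrix embQ2 A = mat (embQ2 d) ** X"
    unfolding mat_entry A_def using d(2) by (simp add: vec_eq_iff) (metis (mono_tags, lifting) someI_ex)
  then show ?thesis using d by blast
qed


lemma zif: "(y::'a::semiring_0) * (if P then c else 0) = (if P then y * c else 0)" by simp
lemma mv_axis: "B *v axis i (1::'a::comm_semiring_1) = column i B"
  by (simp add: vec_eq_iff matrix_vector_mult_def axis_def column_def zif)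

locale zlat =
  fixes M :: "(int^'n) set"
  assumes sub: "\<And>x y. x \<in> M \<Longrightarrow> y \<in> M \<Longrightarrow> x - y \<in> M" and zero: "0 \<in> M"
begin

lemma neg: "x \<in> M \<Longrightarrow> - x \<in> M" using sub[OF zero] by simp
lemma add: "x \<in> M \<Longrightarrow> y \<in> M \<Longrightarrow> x + y \<in> M" using sub[of x "- y"] neg by simp
lemma smul_nat: "x \<in> M \<Longrightarrow> int n *s x \<in> M"
  by (induction n) (auto simp: zero add vector_sadd_rdistrib)
lemma smul: assumes "x \<in> M" shows "t *s x \<in> M"
proof (cases "t \<ge> 0")
  case True then show ?thesis using smul_nat[OF assms, of "nat t"] by simp
next
  case False
  have "- ((- t) *s x) = t *s x" by (simp add: vec_eq_iff)
  then show ?thesis using False neg[OF smul_nat[OF assms, of "nat (- t)"]] by simp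
qed
lemma sum: "finite S \<Longrightarrow> (\<And>i. i \<in> S \<Longrightarrow> f i \<in> M) \<Longrightarrow> sum f S \<in> M"
  by (induction S rule: finite_induct) (auto simp: zero add)

lemma mv_in: assumes "\<And>i. column i B \<in> M" shows "B *v c \<in> M"
proof -
  have "B *v c = (\<Sum>i\<in>UNIV. c $ i *s column i B)"
    by (simp add: matrix_vector_column column_def Finite_Cartesian_Product.transpose_def)
  also have "\<dots> \<in> M" by (rule sum) (auto intro: smul assms)
  finally show ?thesis .
qed

end

lemma lattice_basis:
  fixes M :: "(int^'n) set"
  assumes z: "zlat M" and K: "K > 0" and Kx: "\<And>x. K *s x \<in> M"
  shows "\<exists>B::int^'n^'n. (\<forall>c. B *v c \<in> M) \<and> (\<forall>x\<in>M. \<exists>c. x = B *v c)"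
proof -
  interpret zlat M by (rule z)
  obtain h :: "'n \<Rightarrow> nat" where h: "bij_betw h UNIV {0..<CARD('n)}"
    using ex_bij_betw_finite_nat[of "UNIV :: 'n set"] by auto
  have hinj: "h i = h j \<Longrightarrow> i = j" for i j using h by (auto simp: bij_betw_def inj_def)
  have hlt: "h i < CARD('n)" for i using h by (auto simp: bij_betw_def)
  have himg: "h ` UNIV = {0..<CARD('n)}" using h by (simp add: bij_betw_def)
  have hsurj: "\<exists>i. h i = k" if "k < CARD('n)" for k
  proof -
    have "k \<in> h ` UNIV" using that himg by simp
    then show ?thesis by blast
  qed
  define S where "S k = {x\<in>M. \<forall>j. h j < k \<longrightarrow> x $ j = 0}" for k
  define D where "D i = {x $ i | x. x \<in> S (h i)}" for i
  have SD: "x \<in> S k \<Longrightarrow> y \<in> S k \<Longrightarrow> t *s x - y \<in> S k" for x y k t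
    unfolding S_def by (auto intro: sub smul)
  have KD: "K \<in> D i" for i
  proof -
    have "K *s axis i 1 \<in> S (h i)" unfolding S_def using Kx by (auto simp: axis_def)
    then show ?thesis unfolding D_def by (force simp: axis_def)
  qed
  define d where "d i = int (LEAST m::nat. m > 0 \<and> int m \<in> D i)" for i
  have dD: "d i > 0 \<and> d i \<in> D i" for i
  proof -
    have "nat K > 0 \<and> int (nat K) \<in> D i" using K KD by simp
    from LeastI[of "\<lambda>m. m > 0 \<and> int m \<in> D i", OF this] show ?thesis unfolding d_def by simp
  qed
  have ddvd: "d i dvd t" if tD: "t \<in> D i" for i t
  proof -
    obtain x where x: "x \<in> S (h i)" "t = x $ i" using tD unfolding D_def by blast
    obtain v where v: "v \<in> S (h i)" "d i = v $ i" using dD[of i] unfolding D_def by blast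
    have "(t div d i) *s v - x \<in> S (h i)" using SD[OF v(1) x(1)] .
    then have "- (t mod d i) \<in> D i" unfolding D_def
      by (force simp: x(2) v(2) minus_mod_eq_mult_div [symmetric] algebra_simps)
    then have "t mod d i \<in> D i"
    proof -
      assume "- (t mod d i) \<in> D i"
      then obtain y where "y \<in> S (h i)" "- (t mod d i) = y $ i" unfolding D_def by blast
      moreover have "y \<in> S (h i) \<Longrightarrow> - y \<in> S (h i)" for y unfolding S_def by (auto intro: neg)
      ultimately show ?thesis unfolding D_def by force
    qed
    moreover have "t mod d i \<ge> 0" "t mod d i < d i" using dD[of i] by auto
    ultimately have "t mod d i = 0"
    proof -
      assume a: "t mod d i \<in> D i" "t mod d i \<ge> 0" "t mod d i < d i"
      show ?thesis
      proof (rule ccontr)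
        assume "t mod d i \<noteq> 0"
        then have "nat (t mod d i) > 0 \<and> int (nat (t mod d i)) \<in> D i" using a by simp
        then have "(LEAST m::nat. m > 0 \<and> int m \<in> D i) \<le> nat (t mod d i)" by (rule Least_le)
        then show False using a unfolding d_def by linarith
      qed
    qed
    then show ?thesis by (simp add: dvd_eq_mod_eq_0)
  qed
  define v where "v i = (SOME v. v \<in> S (h i) \<and> v $ i = d i)" for i
  have v: "v i \<in> S (h i) \<and> v i $ i = d i" for i
  proof -
    have "\<exists>v. v \<in> S (h i) \<and> v $ i = d i" using dD[of i] unfolding D_def by force
    then show ?thesis unfolding v_def by (rule someI_ex)
  qed
  define B where "B = (\<chi> r c. v c $ r)"
  have colB: "column i B = v i" for i by (simp add: B_def column_def vec_eq_iff)
  have colM: "column i B \<in> M" for i using v[of i] unfolding colB S_def by auto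
  have claim: "\<forall>x\<in>S k. \<exists>c. (\<forall>j. h j < k \<longrightarrow> c $ j = 0) \<and> x = B *v c" if "k \<le> CARD('n)" for k
    using that
  proof (induction k rule: inc_induct)
    case base
    show ?case
    proof
      fix x assume "x \<in> S CARD('n)"
      then have "x = 0" unfolding S_def using hlt by (auto simp: vec_eq_iff)
      then show "\<exists>c. (\<forall>j. h j < CARD('n) \<longrightarrow> c $ j = 0) \<and> x = B *v c"
        by (rule_tac x=0 in exI) simp
    qed
  next
    case (step k)
    obtain i where i: "h i = k" using hsurj step.hyps(2) by blast
    show ?case
    proof
      fix x assume x: "x \<in> S k"
      have "x $ i \<in> D i" unfolding D_def using x i by blast
      then obtain t where t: "x $ i = d i * t" using ddvd by (meson dvdE)
      define y where "y = x - t *s v i"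
      have yS: "y \<in> S (Suc k)"
      proof -
        have xk: "x \<in> S (h i)" using x i by simp
        have a: "t *s v i - x \<in> S k" using SD[OF conjunct1[OF v[of i]] xk, of t] i by simp
        have yy: "y = - (t *s v i - x)" unfolding y_def by simp
        have "- (t *s v i - x) \<in> S k" using a neg[of "t *s v i - x"] unfolding S_def by auto
        then have "y \<in> S k" using yy by simp
        moreover have "y $ i = 0" unfolding y_def using t v[of i] by simp
        ultimately show ?thesis unfolding S_def using i by (auto simp: less_Suc_eq dest: hinj)
      qed
      from step.IH yS obtain c' where c': "\<forall>j. h j < Suc k \<longrightarrow> c' $ j = 0" "y = B *v c'" by blast
      define c where "c = c' + t *s axis i 1"
      have "\<forall>j. h j < k \<longrightarrow> c $ j = 0"
        unfolding c_def using c'(1) i by (auto simp: axis_def)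
      moreover have "x = B *v c"
      proof -
        have "B *v c = B *v c' + t *s (B *v axis i 1)"
          unfolding c_def by (simp add: matrix_vector_right_distrib mv_scale)
        also have "\<dots> = y + t *s v i" using c'(2) by (simp add: mv_axis colB)
        finally show ?thesis unfolding y_def by simp
      qed
      ultimately show "\<exists>c. (\<forall>j. h j < k \<longrightarrow> c $ j = 0) \<and> x = B *v c" by blast
    qed
  qed
  have "\<forall>x\<in>M. \<exists>c. x = B *v c"
    using claim[of 0] unfolding S_def by auto
  moreover have "\<forall>c. B *v c \<in> M" using mv_in colM by blast
  ultimately show ?thesis by blast
qed


lemma bezout_set: fixes c :: "'n \<Rightarrow> int" assumes "finite S"
  shows "\<exists>a. (\<Sum>k\<in>S. a k * c k) = Gcd (c ` S)"
  using assms
proof (induction S rule: finite_induct)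
  case empty then show ?case by simp
next
  case (insert k S)
  then obtain a where a: "(\<Sum>k\<in>S. a k * c k) = Gcd (c ` S)" by blast
  obtain u v where uv: "u * c k + v * Gcd (c ` S) = gcd (c k) (Gcd (c ` S))" using bezout_int by blast
  define a' where "a' j = (if j = k then u else v * a j)" for j
  have "(\<Sum>j\<in>insert k S. a' j * c j) = u * c k + (\<Sum>j\<in>S. v * (a j * c j))"
    using insert.hyps by (simp add: a'_def mult.assoc cong: sum.cong) (auto intro!: sum.cong simp: a'_def)
  also have "\<dots> = u * c k + v * Gcd (c ` S)" by (simp add: sum_distrib_left[symmetric] a)
  finally show ?case using uv by auto
qed

lemma prim_vec: fixes c :: "int^'n" assumes "c \<noteq> 0"
  shows "\<exists>g c0 a. c = g *s c0 \<and> fdot a c0 = 1"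
proof -
  define G where "G = Gcd ((\<lambda>k. c $ k) ` UNIV)"
  obtain a where a: "(\<Sum>k\<in>UNIV. a k * c $ k) = G" using bezout_set[of UNIV "\<lambda>k. c $ k"] unfolding G_def by auto
  have G0: "G \<noteq> 0" using assms unfolding G_def by (auto simp: vec_eq_iff)
  have Gd: "G dvd c $ k" for k unfolding G_def by (rule Gcd_dvd) simp
  define c0 where "c0 = (\<chi> k. c $ k div G)"
  have cc: "c = G *s c0" using Gd by (simp add: vec_eq_iff c0_def)
  have "G * fdot (\<chi> k. a k) c0 = (\<Sum>k\<in>UNIV. a k * c $ k)"
    unfolding fdot_def by (subst cc) (simp add: sum_distrib_left mult_ac)
  then have "G * fdot (\<chi> k. a k) c0 = G * 1" using a by simp
  then have "fdot (\<chi> k. a k) c0 = 1" using G0 by simp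
  then show ?thesis using cc by blast
qed

lemma two_ne_z2: "(2::z2) \<noteq> 0" by simp

lemma vec_ne0: "(v::'a::zero^'n) \<noteq> 0 \<Longrightarrow> \<exists>i. v $ i \<noteq> 0" by (auto simp: vec_eq_iff)

lemma val_marking:
  fixes C :: "int^'n^'n" and b \<beta> :: "z2^'n"
  assumes CE: "map_matrix of_int C = mat 1 + outer b \<beta>" and fb: "fdot \<beta> b = -2"
  shows "\<exists>b'' \<beta>'' u u'. u * u' = 1 \<and> b = u *s vmap of_int b'' \<and> \<beta> = u' *s vmap of_int \<beta>''"
proof -
  define E where "E = C - mat 1"
  have hi: "rhom (of_int :: int \<Rightarrow> z2)" by (rule rhom_of_int)
  have Ekl: "of_int (E $ k $ l) = b $ k * \<beta> $ l" for k l
  proof -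
    have "map_matrix of_int E = outer b \<beta>"
      unfolding E_def using CE by (simp add: vec_eq_iff mat_def)
    then show ?thesis by (simp add: vec_eq_iff outer_def)
  qed
  have "b \<noteq> 0" "\<beta> \<noteq> 0" using fb by (auto simp: fdot_def)
  then obtain i j where bi: "b $ i \<noteq> 0" and bj: "\<beta> $ j \<noteq> 0" using vec_ne0 by blast
  define c where "c = (\<chi> k. E $ k $ j)"
  define r where "r = (\<chi> l. E $ i $ l)"
  have Eij: "E $ i $ j \<noteq> 0" using Ekl[of i j] bi bj by auto
  have "c $ i \<noteq> 0" using Eij by (simp add: c_def)
  then have c0: "c \<noteq> 0" by auto
  have "r $ j \<noteq> 0" using Eij by (simp add: r_def)
  then have r0: "r \<noteq> 0" by auto
  obtain g c' a where ca: "c = g *s c'" "fdot a c' = 1" using prim_vec[OF c0] by blast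
  obtain g' r' a' where ra: "r = g' *s r'" "fdot a' r' = 1" using prim_vec[OF r0] by blast
  define lam where "lam = fdot (vmap of_int a) b"
  define \<mu> where "\<mu> = fdot (vmap of_int a') \<beta>"
  have bl: "b = lam *s vmap of_int c'"
  proof -
    have "\<beta> $ j * lam = of_int g"
    proof -
      have "\<beta> $ j * lam = (\<Sum>k\<in>UNIV. of_int (a $ k) * of_int (c $ k))"
        unfolding lam_def fdot_def by (simp add: sum_distrib_left c_def Ekl mult_ac)
      also have "\<dots> = of_int (fdot a c)" by (simp add: fdot_def)
      also have "\<dots> = of_int g" using ca by (simp add: fdot_scale)
      finally show ?thesis .
    qed
    then have "\<beta> $ j * b $ k = \<beta> $ j * (lam * of_int (c' $ k))" for k
    proof -
      assume h: "\<beta> $ j * lam = of_int g"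
      have "\<beta> $ j * b $ k = of_int (c $ k)" by (simp add: c_def Ekl mult.commute)
      also have "\<dots> = of_int g * of_int (c' $ k)" using ca by simp
      also have "\<dots> = \<beta> $ j * (lam * of_int (c' $ k))" by (simp add: h[symmetric] mult.assoc)
      finally show ?thesis .
    qed
    then show ?thesis using bj by (simp add: vec_eq_iff)
  qed
  have bm: "\<beta> = \<mu> *s vmap of_int r'"
  proof -
    have "b $ i * \<mu> = of_int g'"
    proof -
      have "b $ i * \<mu> = (\<Sum>k\<in>UNIV. of_int (a' $ k) * of_int (r $ k))"
        unfolding \<mu>_def fdot_def by (simp add: sum_distrib_left r_def Ekl mult_ac)
      also have "\<dots> = of_int (fdot a' r)" by (simp add: fdot_def)
      also have "\<dots> = of_int g'" using ra by (simp add: fdot_scale)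
      finally show ?thesis .
    qed
    then have "b $ i * \<beta> $ k = b $ i * (\<mu> * of_int (r' $ k))" for k
    proof -
      assume h: "b $ i * \<mu> = of_int g'"
      have "b $ i * \<beta> $ k = of_int (r $ k)" by (simp add: r_def Ekl)
      also have "\<dots> = of_int g' * of_int (r' $ k)" using ra by simp
      also have "\<dots> = b $ i * (\<mu> * of_int (r' $ k))" by (simp add: h[symmetric] mult.assoc)
      finally show ?thesis .
    qed
    then show ?thesis using bi by (simp add: vec_eq_iff)
  qed
  define T where "T = (\<Sum>k\<in>UNIV. \<Sum>l\<in>UNIV. a $ k * a' $ l * E $ k $ l)"
  have lmT: "lam * \<mu> = of_int T"
    unfolding lam_def \<mu>_def fdot_def T_def
    by (simp add: sum_product Ekl mult_ac) (rule sum.swap)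
  have "b \<noteq> 0" by fact
  then have "lam \<noteq> 0" using bl by auto
  then obtain e v where v: "z2unit v" "lam = 2^e * v" using z2_valuation by blast
  then obtain v' where vv: "v * v' = 1" unfolding z2unit_def by blast
  have "of_int T = 2^e * (v * \<mu>)" using lmT v by (simp add: mult.assoc)
  then have "(2::int)^e dvd T" by (rule z2_dvd_int)
  then obtain T' where T': "T = 2^e * T'" by blast
  have "(2::z2)^e * (v * \<mu>) = 2^e * of_int T'" using lmT v T' by (simp add: mult.assoc)
  then have vm: "v * \<mu> = of_int T'" by simp
  have "\<mu> = v' * of_int T'"
  proof -
    have "\<mu> = (v' * v) * \<mu>" using vv by (simp add: mult.commute)
    also have "\<dots> = v' * of_int T'" using vm by (simp add: mult.assoc)
    finally show ?thesis .
  qed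
  then have "\<beta> = v' *s vmap of_int (T' *s r')"
    using bm by (simp add: vec_eq_iff mult.assoc)
  moreover have "b = v *s vmap of_int ((2^e) *s c')"
    using bl v by (simp add: vec_eq_iff mult_ac)
  ultimately show ?thesis using vv by blast
qed

lemma unit_pm1:
  fixes b \<beta> x \<xi> :: "int^'n" and u u' :: z2
  assumes uu: "u * u' = 1" and fb: "fdot \<beta> b = -2"
    and x: "vmap of_int x = u *s vmap of_int b" and xi: "vmap of_int \<xi> = u' *s vmap of_int \<beta>"
  shows "u = 1 \<or> u = -1"
proof -
  have hi: "rhom (of_int :: int \<Rightarrow> z2)" by (rule rhom_of_int)
  have fb': "fdot (vmap of_int \<beta>) (vmap of_int b) = (-2 :: z2)"
    using fdot_hom[OF hi, of \<beta> b] fb by simp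
  define m where "m = fdot \<beta> x"
  define m' where "m' = fdot \<xi> b"
  have m: "(of_int m :: z2) = u * (-2)"
    unfolding m_def fdot_hom[OF hi] x by (simp add: fdot_scale fb')
  have m': "(of_int m' :: z2) = u' * (-2)"
    unfolding m'_def fdot_hom[OF hi] xi by (simp add: fdot_scale_l fb')
  have "(of_int (m * m') :: z2) = 4 * (u * u')" using m m' by (simp add: algebra_simps)
  then have mm: "m * m' = 4" using uu by (metis mult.right_neutral of_int_eq_iff of_int_numeral)
  have "(of_int m :: z2) = 2^1 * (- u)" using m by simp
  then have "(2::int)^1 dvd m" by (rule z2_dvd_int)
  then obtain t where t: "m = 2 * t" by auto
  have "(of_int m' :: z2) = 2^1 * (- u')" using m' by simp
  then have "(2::int)^1 dvd m'" by (rule z2_dvd_int)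
  then obtain t' where t': "m' = 2 * t'" by auto
  have "t * t' = 1" using mm t t' by simp
  then have "t = 1 \<or> t = -1" by (rule pos_zmult_eq_1_iff_lemma)
  moreover have "2 * (of_int t + u) = (0::z2)" using m t by (simp add: algebra_simps)
  then have "u = - of_int t" by (simp add: add_eq_0_iff)
  ultimately show ?thesis by auto
qed


lemma vm_scale: "(c *s x) v* A = c *s (x v* (A::'a::comm_semiring_1^'n^'m))"
  by (simp add: vec_eq_iff vector_matrix_mult_def sum_distrib_left mult.assoc)

definition Tm :: "'a::comm_ring_1^'n^'n \<Rightarrow> (('a^'n) \<times> ('a^'n)) set \<Rightarrow> (('a^'n) \<times> ('a^'n)) set" where
  "Tm X S = (\<lambda>(b, \<beta>). (X *v b, \<beta> v* matrix_inv X)) ` S"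

lemma Tm_mclass: "Tm X (mclass b \<beta>) = mclass (X *v b) (\<beta> v* matrix_inv X)"
proof
  show "Tm X (mclass b \<beta>) \<subseteq> mclass (X *v b) (\<beta> v* matrix_inv X)"
  proof
    fix p assume "p \<in> Tm X (mclass b \<beta>)"
    then obtain u v where "p = (X *v (u *s b), (v *s \<beta>) v* matrix_inv X)" "u * v = 1"
      unfolding Tm_def mclass_def by auto
    then show "p \<in> mclass (X *v b) (\<beta> v* matrix_inv X)" unfolding mclass_def by (auto simp: mv_scale vm_scale)
  qed
  show "mclass (X *v b) (\<beta> v* matrix_inv X) \<subseteq> Tm X (mclass b \<beta>)"
  proof
    fix p assume "p \<in> mclass (X *v b) (\<beta> v* matrix_inv X)"
    then obtain u v where p: "p = (u *s (X *v b), v *s (\<beta> v* matrix_inv X))" "u * v = 1"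
      unfolding mclass_def by auto
    have m: "(u *s b, v *s \<beta>) \<in> mclass b \<beta>" using p(2) unfolding mclass_def by auto
    show "p \<in> Tm X (mclass b \<beta>)" unfolding Tm_def
      by (rule image_eqI[OF _ m]) (simp add: p(1) mv_scale vm_scale)
  qed
qed

lemma mclass_unit: assumes "u * u' = (1::'a::comm_ring_1)"
  shows "mclass (u *s b) (u' *s \<beta>) = mclass b \<beta>"
proof
  show "mclass (u *s b) (u' *s \<beta>) \<subseteq> mclass b \<beta>"
  proof
    fix p assume "p \<in> mclass (u *s b) (u' *s \<beta>)"
    then obtain s t where p: "p = (s *s (u *s b), t *s (u' *s \<beta>))" "s * t = 1" unfolding mclass_def by blast
    have "(s * u) * (t * u') = 1" using p(2) assms by (simp add: mult_ac)
    then show "p \<in> mclass b \<beta>" unfolding mclass_def using p(1) by (force simp: vector_smult_assoc)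
  qed
  show "mclass b \<beta> \<subseteq> mclass (u *s b) (u' *s \<beta>)"
  proof
    fix p assume "p \<in> mclass b \<beta>"
    then obtain s t where p: "p = (s *s b, t *s \<beta>)" "s * t = 1" unfolding mclass_def by blast
    have "(s * u') * (t * u) = 1" using p(2) assms by (simp add: mult_ac)
    moreover have "p = ((s * u') *s (u *s b), (t * u) *s (u' *s \<beta>))"
      using p(1) assms by (simp add: vector_smult_assoc mult_ac)
    ultimately show "p \<in> mclass (u *s b) (u' *s \<beta>)" unfolding mclass_def by blast
  qed
qed

lemma ext_mclass: fixes b \<beta> :: "int^'n" shows "ext_marking (mclass b \<beta>) = mclass (vmap of_int b) (vmap of_int \<beta>)"
proof
  have hi: "rhom (of_int :: int \<Rightarrow> z2)" by (rule rhom_of_int)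
  show "ext_marking (mclass b \<beta>) \<subseteq> mclass (vmap of_int b) (vmap of_int \<beta>)"
  proof
    fix p assume "p \<in> ext_marking (mclass b \<beta>)"
    then obtain u v b' \<beta>' s t where p: "p = (u *s vmap of_int b', v *s vmap of_int \<beta>')" "u * v = 1"
      "b' = s *s b" "\<beta>' = t *s \<beta>" "s * t = 1"
      unfolding ext_marking_def mclass_def by blast
    have "(u * of_int s) * (v * of_int t) = (1::z2)"
      using p(2) arg_cong[OF p(5), of "of_int :: int \<Rightarrow> z2"] by (simp add: mult_ac)
    moreover have "p = ((u * of_int s) *s vmap of_int b, (v * of_int t) *s vmap of_int \<beta>)"
      using p by (simp add: vmap_scale[OF hi] vector_smult_assoc)
    ultimately show "p \<in> mclass (vmap of_int b) (vmap of_int \<beta>)" unfolding mclass_def by blast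
  qed
  show "mclass (vmap of_int b) (vmap of_int \<beta>) \<subseteq> ext_marking (mclass b \<beta>)"
  proof
    fix p :: "(z2^'n) \<times> (z2^'n)" assume "p \<in> mclass (vmap of_int b) (vmap of_int \<beta>)"
    then obtain u v where p: "p = (u *s vmap of_int b, v *s vmap of_int \<beta>)" "u * v = 1" unfolding mclass_def by blast
    have "(b, \<beta>) \<in> mclass b \<beta>" unfolding mclass_def by (rule CollectI, rule exI[of _ 1], rule exI[of _ 1]) simp
    then show "p \<in> ext_marking (mclass b \<beta>)" unfolding ext_marking_def using p by blast
  qed
qed

definition intpts :: "((z2^'n) \<times> (z2^'n)) set \<Rightarrow> ((int^'n) \<times> (int^'n)) set" where
  "intpts S = {(x, \<xi>). (vmap of_int x, vmap of_int \<xi>) \<in> S}"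

lemma inj_of_int_z2: "inj (of_int :: int \<Rightarrow> z2)" by (rule injI) simp

lemma intpts_mclass: fixes b \<beta> :: "int^'n" assumes fb: "fdot \<beta> b = -2"
  shows "intpts (mclass (vmap of_int b) (vmap of_int \<beta>)) = mclass b \<beta>"
proof
  have hi: "rhom (of_int :: int \<Rightarrow> z2)" by (rule rhom_of_int)
  show "mclass b \<beta> \<subseteq> intpts (mclass (vmap of_int b) (vmap of_int \<beta>))"
  proof
    fix p assume "p \<in> mclass b \<beta>"
    then obtain s t where p: "p = (s *s b, t *s \<beta>)" "s * t = 1" unfolding mclass_def by blast
    have "of_int s * of_int t = (1::z2)" using arg_cong[OF p(2), of "of_int :: int \<Rightarrow> z2"] by simp
    then show "p \<in> intpts (mclass (vmap of_int b) (vmap of_int \<beta>))"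
      unfolding intpts_def mclass_def using p by (auto simp: vmap_scale[OF hi])
  qed
  show "intpts (mclass (vmap of_int b) (vmap of_int \<beta>)) \<subseteq> mclass b \<beta>"
  proof
    fix p assume "p \<in> intpts (mclass (vmap of_int b) (vmap of_int \<beta>))"
    moreover obtain x \<xi> where px: "p = (x, \<xi>)" by (cases p)
    ultimately have "(vmap of_int x, vmap of_int \<xi>) \<in> mclass (vmap of_int b) (vmap (of_int :: int \<Rightarrow> z2) \<beta>)"
      unfolding intpts_def by simp
    then obtain u v where uv: "u * v = 1"
      "vmap of_int x = u *s vmap of_int b" "vmap of_int \<xi> = v *s vmap (of_int :: int \<Rightarrow> z2) \<beta>"
      unfolding mclass_def by blast
    note p = px uv
    from unit_pm1[OF p(2) fb p(3) p(4)] have "u = 1 \<or> u = -1" .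
    then show "p \<in> mclass b \<beta>"
    proof
      assume u: "u = 1"
      then have "v = 1" using p(2) by simp
      then have "x = b" "\<xi> = \<beta>" using p(3,4) u by (auto intro: vmap_inj[OF inj_of_int_z2])
      then show ?thesis unfolding mclass_def using p(1) by (auto intro!: exI[of _ 1])
    next
      assume u: "u = -1"
      then have "v = -1" using p(2) by (simp add: minus_equation_iff)
      then have "vmap (of_int :: int \<Rightarrow> z2) x = vmap of_int ((-1) *s b)" "vmap (of_int :: int \<Rightarrow> z2) \<xi> = vmap of_int ((-1) *s \<beta>)"
        using p(3,4) u by (simp_all add: vec_eq_iff)
      then have "x = (-1) *s b" "\<xi> = (-1) *s \<beta>" by (auto intro: vmap_inj[OF inj_of_int_z2])
      then show ?thesis unfolding mclass_def using p(1) by (auto intro!: exI[of _ "-1"])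
    qed
  qed
qed

lemma colmat: fixes Z :: "'a::comm_semiring_1^'m^'r"
  assumes "\<And>j. Z *v f j = column j X" shows "Z ** (\<chi> r j. f j $ r) = X"
proof -
  have "(Z ** (\<chi> r j. f j $ r)) $ i $ j = X $ i $ j" for i j
  proof -
    have "(Z ** (\<chi> r j. f j $ r)) $ i $ j = (Z *v f j) $ i"
      by (simp add: matrix_matrix_mult_def matrix_vector_mult_def)
    then show ?thesis using assms[of j] by (simp add: column_def)
  qed
  then show ?thesis by (simp add: vec_eq_iff)
qed

lemma left_from_right: fixes B G :: "int^'n^'n"
  assumes BG: "B ** G = mat K" and K: "K \<noteq> 0" shows "G ** B = mat K"
proof -
  have hr: "rhom (of_int :: int \<Rightarrow> rat)" by (rule rhom_of_int)
  let ?B = "map_matrix (of_int :: int \<Rightarrow> rat) B" and ?G = "map_matrix (of_int :: int \<Rightarrow> rat) G"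
  have "?B ** ?G = mat (of_int K)" using arg_cong[OF BG, of "map_matrix (of_int :: int \<Rightarrow> rat)"]
    by (simp add: map_matrix_mult[OF hr] map_matrix_mat[OF hr])
  then have "?B ** (?G ** mat (1 / of_int K)) = mat 1"
    using K by (simp add: matrix_mul_assoc mat_mult_mat)
  then have "(?G ** mat (1 / of_int K)) ** ?B = mat 1" by (rule matrix_left_right_inverse1)
  then have "mat (of_int K) ** ((?G ** mat (1 / of_int K)) ** ?B) = mat (of_int K)" by simp
  moreover have "mat (of_int K) ** ((?G ** mat (1 / of_int K)) ** ?B) = ?G ** ?B"
  proof -
    have "(?G ** mat (1 / of_int K)) ** ?B = mat (1 / of_int K) ** (?G ** ?B)"
      by (simp add: mat_comm matrix_mul_assoc)
    then show ?thesis using K by (simp add: matrix_mul_assoc mat_mult_mat)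
  qed
  ultimately have "map_matrix of_int (G ** B) = map_matrix (of_int :: int \<Rightarrow> rat) (mat K)"
    by (simp add: map_matrix_mult[OF hr] map_matrix_mat[OF hr])
  then show ?thesis by (rule map_matrix_inj[rotated]) (simp add: inj_def)
qed

lemma outer_sq: "outer b \<beta> ** outer b \<beta> = mat (fdot \<beta> b) ** outer b (\<beta>::'a::comm_semiring_1^'n)"
  unfolding mat_entry by (simp add: vec_eq_iff outer_def mat_entry matrix_matrix_mult_def fdot_def sum_distrib_left sum_distrib_right mult_ac)

lemma AR_marking: fixes A :: "'a::field^'n^'n"
  assumes "AR A" "A = mat 1 + outer b \<beta>" and two: "(2::'a) \<noteq> 0" shows "fdot \<beta> b = -2"
proof -
  obtain b' \<beta>' where A: "A = mat 1 + outer b' \<beta>'" "fdot \<beta>' b' = -2" using assms(1) unfolding AR_def by blast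
  have N: "outer b \<beta> = outer b' \<beta>'" using A(1) assms(2) by simp
  have "b' \<noteq> 0" "\<beta>' \<noteq> 0" using A(2) two by (auto simp: fdot_def)
  then obtain i j where "b' $ i \<noteq> 0" "\<beta>' $ j \<noteq> 0" using vec_ne0 by blast
  then have Nij: "outer b' \<beta>' $ i $ j \<noteq> 0" by (simp add: outer_def)
  have "mat (fdot \<beta> b) ** outer b' \<beta>' = mat (-2) ** outer b' \<beta>'"
    using outer_sq[of b \<beta>] outer_sq[of b' \<beta>'] N A(2) by simp
  then have "fdot \<beta> b * outer b' \<beta>' $ i $ j = -2 * outer b' \<beta>' $ i $ j"
    unfolding mat_entry by (simp add: vec_eq_iff)
  then have "(fdot \<beta> b + 2) * outer b' \<beta>' $ i $ j = 0" by (simp add: distrib_right)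
  with Nij have "fdot \<beta> b + 2 = 0" by simp
  then show ?thesis by (simp add: eq_neg_iff_add_eq_0)
qed

lemma conj_outer: fixes X Xi :: "'a::comm_ring_1^'n^'n"
  assumes "X ** Xi = mat 1"
  shows "X ** (mat 1 + outer b \<beta>) ** Xi = mat 1 + outer (X *v b) (\<beta> v* Xi)"
proof -
  have "(X ** (mat 1 + outer b \<beta>) ** Xi) *v x = (mat 1 + outer (X *v b) (\<beta> v* Xi)) *v x" for x
  proof -
    have "(X ** (mat 1 + outer b \<beta>) ** Xi) *v x = X *v (Xi *v x) + fdot \<beta> (Xi *v x) *s (X *v b)"
      by (simp add: matrix_vector_mul_assoc[symmetric] matrix_vector_mult_add_rdistrib outer_mv
          matrix_vector_right_distrib mv_scale)
    also have "\<dots> = (X ** Xi) *v x + fdot (\<beta> v* Xi) x *s (X *v b)"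
      by (simp add: matrix_vector_mul_assoc fdot_vm)
    finally show ?thesis
      using assms by (simp add: matrix_vector_mult_add_rdistrib outer_mv matrix_left_right_inverse)
  qed
  then show ?thesis by (simp add: matrix_eq)
qed


abbreviation I2 :: "int^'n^'m \<Rightarrow> z2^'n^'m" where "I2 X \<equiv> map_matrix of_int X"
abbreviation J2 :: "z2^'n^'m \<Rightarrow> q2^'n^'m" where "J2 X \<equiv> map_matrix embQ2 X"

lemma hI: "rhom (of_int :: int \<Rightarrow> z2)" by (rule rhom_of_int)

lemma J2I2: "J2 (I2 X) = map_matrix (\<lambda>k. embQ2 (of_int k)) X"
  by (simp add: vec_eq_iff)

lemma col_mat: "column j (mat (K::'a::comm_semiring_1)) = K *s axis j 1"
  by (simp add: vec_eq_iff column_def mat_def axis_def)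

lemma vmap_col: "vmap f (column j B) = column j (map_matrix f B)"
  by (simp add: vec_eq_iff column_def)

lemma col_mult: "column j (X ** Z) = X *v column j (Z::'a::comm_semiring_1^'n^'m)"
  by (simp add: vec_eq_iff column_def matrix_matrix_mult_def matrix_vector_mult_def)

lemma vec_density: fixes q :: "z2^'n"
  shows "\<exists>k r. q = vmap of_int k + 2^N *s r"
proof -
  have "\<forall>i. \<exists>p. q $ i = of_int (fst p) + 2^N * snd p" using z2_density[of _ N] by fastforce
  then obtain f where f: "\<forall>i. q $ i = of_int (fst (f i)) + 2^N * snd (f i)" by (metis choice)
  then have "q = vmap of_int (\<chi> i. fst (f i)) + 2^N *s (\<chi> i. snd (f i))" by (simp add: vec_eq_iff)
  then show ?thesis by blast
qed

lemma construct:
  fixes W :: "(z2^'n^'n) set" and W' :: "(int^'n^'n) set" and P :: "q2^'n^'n"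
  assumes P: "invertible P"
    and img: "(\<lambda>w. P ** J2 w ** matrix_inv P) ` W = map_matrix (\<lambda>k. embQ2 (of_int k)) ` W'"
  shows "\<exists>U Y :: z2^'n^'n. U ** Y = mat 1 \<and> Y ** U = mat 1 \<and> (\<forall>w\<in>W. \<exists>C. I2 C = U ** w ** Y)"
proof -
  have hE: "rhom embQ2" by (rule rhom_embQ2)
  define Pi where "Pi = matrix_inv P"
  have PP: "P ** Pi = mat 1" "Pi ** P = mat 1" using inv_props[OF P] unfolding Pi_def by auto
  obtain d A where d: "d \<noteq> 0" and A: "J2 A = mat (embQ2 d) ** P" using matrix_denom[of P] by blast
  obtain d2 A3 where d2: "d2 \<noteq> 0" and A3: "J2 A3 = mat (embQ2 d2) ** Pi" using matrix_denom[of Pi] by blast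
  have inter: "A ** w = I2 w' ** A" if "P ** J2 w ** Pi = J2 (I2 w')" for w w'
  proof -
    have "P ** J2 w = J2 (I2 w') ** P"
    proof -
      have "P ** J2 w = (P ** J2 w ** Pi) ** P" using PP by (simp add: matrix_mul_assoc[symmetric])
      then show ?thesis using that by simp
    qed
    then have "J2 (A ** w) = J2 (I2 w' ** A)"
      by (simp add: map_matrix_mult[OF hE] A matrix_mul_assoc[symmetric] mat_comm)
        (simp add: matrix_mul_assoc mat_comm)
    then show ?thesis by (rule map_matrix_inj[OF inj_embQ2])
  qed
  have inter1: "\<forall>w\<in>W. \<exists>w'\<in>W'. A ** w = I2 w' ** A"
  proof
    fix w assume "w \<in> W"
    then have "P ** J2 w ** Pi \<in> map_matrix (\<lambda>k. embQ2 (of_int k)) ` W'" using img unfolding Pi_def by blast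
    then obtain w' where "w' \<in> W'" "P ** J2 w ** Pi = J2 (I2 w')" by (auto simp: J2I2)
    then show "\<exists>w'\<in>W'. A ** w = I2 w' ** A" using inter by blast
  qed
  have inter2: "\<forall>w'\<in>W'. \<exists>w\<in>W. A ** w = I2 w' ** A"
  proof
    fix w' assume "w' \<in> W'"
    then have "J2 (I2 w') \<in> (\<lambda>w. P ** J2 w ** matrix_inv P) ` W" using img by (auto simp: J2I2)
    then obtain w where "w \<in> W" "P ** J2 w ** Pi = J2 (I2 w')" unfolding Pi_def by auto
    then show "\<exists>w\<in>W. A ** w = I2 w' ** A" using inter by blast
  qed
  have dd: "d * d2 \<noteq> 0" using d d2 by simp
  obtain v u where u: "z2unit u" "d * d2 = 2^v * u" using z2_valuation[OF dd] by blast
  obtain u' where uu: "u * u' = 1" using u unfolding z2unit_def by blast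
  have PmP: "P ** mat c ** Pi = mat c" "Pi ** mat c ** P = mat c" for c
  proof -
    have "P ** mat c ** Pi = mat c ** (P ** Pi)" by (simp only: mat_comm matrix_mul_assoc)
    then show "P ** mat c ** Pi = mat c" using PP by simp
    have "Pi ** mat c ** P = mat c ** (Pi ** P)" by (simp only: mat_comm matrix_mul_assoc)
    then show "Pi ** mat c ** P = mat c" using PP by simp
  qed
  have AA3: "A ** A3 = mat (d * d2)"
  proof -
    have "J2 (A ** A3) = mat (embQ2 d) ** (P ** mat (embQ2 d2) ** Pi)"
      by (simp add: map_matrix_mult[OF hE] A A3 matrix_mul_assoc)
    also have "\<dots> = J2 (mat (d * d2))"
      by (simp add: PmP mat_mult_mat map_matrix_mat[OF hE] rhom_mult[OF hE])
    finally show ?thesis by (rule map_matrix_inj[OF inj_embQ2])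
  qed
  have A3A: "A3 ** A = mat (d * d2)"
  proof -
    have "J2 (A3 ** A) = mat (embQ2 d2) ** (Pi ** mat (embQ2 d) ** P)"
      by (simp add: map_matrix_mult[OF hE] A A3 matrix_mul_assoc)
    also have "\<dots> = J2 (mat (d * d2))"
      by (simp add: PmP mat_mult_mat map_matrix_mat[OF hE] rhom_mult[OF hE] mult.commute)
    finally show ?thesis by (rule map_matrix_inj[OF inj_embQ2])
  qed
  define A2 where "A2 = A3 ** mat u'"
  have AA2: "A ** A2 = mat (2^v)"
  proof -
    have "A ** A2 = mat (d * d2) ** mat u'" unfolding A2_def by (simp add: matrix_mul_assoc AA3)
    also have "\<dots> = mat (2^v * (u * u'))" by (simp add: mat_mult_mat u mult.assoc)
    finally show ?thesis using uu by simp
  qed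
  have A2A: "A2 ** A = mat (2^v)"
  proof -
    have "A2 ** A = A3 ** (mat u' ** A)" unfolding A2_def by (simp add: matrix_mul_assoc)
    also have "\<dots> = (A3 ** A) ** mat u'" by (simp add: mat_comm matrix_mul_assoc)
    also have "\<dots> = mat (2^v * (u * u'))" by (simp add: A3A mat_mult_mat u mult.assoc)
    finally show ?thesis using uu by simp
  qed
  define K :: int where "K = 2^v"
  have K0: "K > 0" unfolding K_def by simp
  have IK: "(of_int K :: z2) = 2^v" unfolding K_def by simp
  define M where "M = {x. \<exists>y. vmap of_int x = A *v y}"
  have zl: "zlat M"
  proof
    show "x - y \<in> M" if xyM: "x \<in> M" "y \<in> M" for x y
    proof -
      obtain y1 y2 where "vmap of_int x = A *v y1" "vmap of_int y = A *v y2" using xyM unfolding M_def by blast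
      then have "vmap of_int (x - y) = A *v (y1 - y2)"
        by (simp add: vmap_diff[OF hI] matrix_vector_mult_diff_distrib)
      then show ?thesis unfolding M_def by blast
    qed
    show "0 \<in> M" unfolding M_def by (rule CollectI, rule exI[of _ 0]) (simp add: vmap_0[OF hI])
  qed
  have Kx: "K *s x \<in> M" for x
  proof -
    have "vmap of_int (K *s x) = A *v (A2 *v vmap of_int x)"
      by (simp add: vmap_scale[OF hI] IK matrix_vector_mul_assoc AA2 mat_mv)
    then show ?thesis unfolding M_def by blast
  qed
  obtain B :: "int^'n^'n" where B1: "\<forall>c. B *v c \<in> M" and B2: "\<forall>x\<in>M. \<exists>c. x = B *v c"
    using lattice_basis[OF zl K0 Kx] by blast
  have MW: "w' *v x \<in> M" if wx: "w' \<in> W'" "x \<in> M" for w' x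
  proof -
    obtain w where w: "A ** w = I2 w' ** A" using inter2 wx(1) by blast
    obtain y where y: "vmap of_int x = A *v y" using wx(2) unfolding M_def by blast
    have "vmap of_int (w' *v x) = A *v (w *v y)"
      by (simp add: vmap_mv[OF hI] y matrix_vector_mul_assoc w)
    then show ?thesis unfolding M_def by blast
  qed
  have "\<forall>j. \<exists>y. A *v y = column j (I2 B)"
  proof
    fix j
    have "B *v axis j 1 \<in> M" using B1 by blast
    then obtain y where "vmap of_int (B *v axis j 1) = A *v y" unfolding M_def by blast
    then show "\<exists>y. A *v y = column j (I2 B)" by (metis mv_axis vmap_col)
  qed
  then obtain yf where yf: "\<And>j. A *v yf j = column j (I2 B)" by (metis choice)
  define Y where "Y = (\<chi> r j. yf j $ r)"
  have AY: "A ** Y = I2 B" unfolding Y_def by (rule colmat[OF yf])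
  have "\<forall>j. \<exists>c. B *v c = column j (mat K)"
  proof
    fix j
    obtain c where "K *s axis j 1 = B *v c" using B2 Kx by blast
    then show "\<exists>c. B *v c = column j (mat K)" by (metis col_mat)
  qed
  then obtain gf where gf: "\<And>j. B *v gf j = column j (mat K)" by (metis choice)
  define Gm where "Gm = (\<chi> r j. gf j $ r)"
  have BG: "B ** Gm = mat K" unfolding Gm_def by (rule colmat[OF gf])
  have GB: "Gm ** B = mat K" using left_from_right[OF BG] K0 by simp
  have IBG: "I2 B ** I2 Gm = mat (2^v)" using BG
    by (metis IK map_matrix_mat[OF hI] map_matrix_mult[OF hI])
  have IGB: "I2 Gm ** I2 B = mat (2^v)" using GB
    by (metis IK map_matrix_mat[OF hI] map_matrix_mult[OF hI])
  have "\<forall>j. \<exists>c. I2 B *v c = column j A"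
  proof
    fix j
    obtain k r where kr: "A *v axis j 1 = vmap of_int k + 2^v *s r" using vec_density by blast
    have "vmap of_int k = A *v (axis j 1 - A2 *v r)"
      using kr by (simp add: matrix_vector_mult_diff_distrib matrix_vector_mul_assoc AA2 mat_mv)
    then have "k \<in> M" unfolding M_def by blast
    then obtain c where c: "k = B *v c" using B2 by blast
    have "2^v *s r = I2 B *v (I2 Gm *v r)" by (simp add: matrix_vector_mul_assoc IBG mat_mv)
    then have "A *v axis j 1 = I2 B *v (vmap of_int c + I2 Gm *v r)"
      using kr c by (simp add: vmap_mv[OF hI] matrix_vector_right_distrib)
    then show "\<exists>c. I2 B *v c = column j A" by (metis mv_axis)
  qed
  then obtain uf where uf: "\<And>j. I2 B *v uf j = column j A" by (metis choice)
  define U where "U = (\<chi> r j. uf j $ r)"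
  have BU: "I2 B ** U = A" unfolding U_def by (rule colmat[OF uf])
  have two: "(2::z2)^v \<noteq> 0" by simp
  have YU: "Y ** U = mat 1"
  proof -
    have "A = A ** (Y ** U)" using AY BU by (simp add: matrix_mul_assoc)
    then have "A2 ** A = A2 ** A ** (Y ** U)" by (metis matrix_mul_assoc)
    then have "mat (2^v) ** mat 1 = mat (2^v) ** (Y ** U)" using A2A by simp
    then have "mat 1 = Y ** U" using two by (rule mat_cancel)
    then show ?thesis by (rule sym)
  qed
  have UY: "U ** Y = mat 1"
  proof -
    have "I2 B = I2 B ** (U ** Y)" using AY BU by (simp add: matrix_mul_assoc)
    then have "I2 Gm ** I2 B = I2 Gm ** I2 B ** (U ** Y)" by (metis matrix_mul_assoc)
    then have "mat (2^v) ** mat 1 = mat (2^v) ** (U ** Y)" using IGB by simp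
    then have "mat 1 = U ** Y" using two by (rule mat_cancel)
    then show ?thesis by (rule sym)
  qed
  have conj: "\<exists>C. I2 C = U ** w ** Y" if wW: "w \<in> W" for w
  proof -
    obtain w' where w': "w' \<in> W'" "A ** w = I2 w' ** A" using inter1 wW by blast
    have "\<forall>j. \<exists>c. B *v c = column j (w' ** B)"
    proof
      fix j
      have "w' *v (B *v axis j 1) \<in> M" using MW[OF w'(1)] B1 by blast
      then obtain c where "w' *v (B *v axis j 1) = B *v c" using B2 by blast
      then show "\<exists>c. B *v c = column j (w' ** B)" by (metis col_mult mv_axis)
    qed
    then obtain cf where cf: "\<And>j. B *v cf j = column j (w' ** B)" by (metis choice)
    define Cw where "Cw = (\<chi> r j. cf j $ r)"
    have BC: "B ** Cw = w' ** B" unfolding Cw_def by (rule colmat[OF cf])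
    have "I2 B ** (U ** w ** Y) = I2 B ** I2 Cw"
    proof -
      have "I2 B ** (U ** w ** Y) = A ** w ** Y" using BU by (simp add: matrix_mul_assoc)
      also have "\<dots> = I2 w' ** I2 B" using w'(2) AY by (simp add: matrix_mul_assoc[symmetric])
      also have "\<dots> = I2 B ** I2 Cw" using BC by (metis map_matrix_mult[OF hI])
      finally show ?thesis .
    qed
    then have "I2 Gm ** I2 B ** (U ** w ** Y) = I2 Gm ** I2 B ** I2 Cw" by (metis matrix_mul_assoc)
    then have "mat (2^v) ** (U ** w ** Y) = mat (2^v) ** I2 Cw" using IGB by simp
    then have "U ** w ** Y = I2 Cw" using two by (rule mat_cancel)
    then show ?thesis by metis
  qed
  show ?thesis using UY YU conj by blast
qed


lemma Tm_Tm: fixes A B :: "'a::comm_ring_1^'n^'n"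
  assumes "invertible A" "invertible B" shows "Tm A (Tm B S) = Tm (A ** B) S"
  unfolding Tm_def image_image using matrix_inv_mult[OF assms]
  by (simp add: matrix_vector_mul_assoc vector_matrix_mul_assoc case_prod_unfold)

lemma intpts_Tm: fixes V :: "int^'n^'n" assumes V: "invertible V"
  shows "intpts (Tm (I2 V) S) = Tm V (intpts S)"
proof -
  have mi: "matrix_inv (I2 V) = I2 (matrix_inv V)" using map_inv[OF hI V] by simp
  have VV: "V ** matrix_inv V = mat 1" "matrix_inv V ** V = mat 1" using inv_props[OF V] by auto
  have IVV: "I2 V ** I2 (matrix_inv V) = mat 1" "I2 (matrix_inv V) ** I2 V = mat 1"
    using VV by (metis map_matrix_mult[OF hI] map_matrix_mat[OF hI] of_int_1)+
  show ?thesis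
  proof
    show "intpts (Tm (I2 V) S) \<subseteq> Tm V (intpts S)"
    proof
      fix p assume "p \<in> intpts (Tm (I2 V) S)"
      moreover obtain x \<xi> where px: "p = (x, \<xi>)" by (cases p)
      ultimately have "(vmap of_int x, vmap of_int \<xi>) \<in> Tm (I2 V) S" unfolding intpts_def by simp
      then obtain b \<beta> where bS: "(b, \<beta>) \<in> S" and e: "vmap of_int x = I2 V *v b" "vmap of_int \<xi> = \<beta> v* I2 (matrix_inv V)"
        unfolding Tm_def mi by auto
      have "vmap of_int (matrix_inv V *v x) = b"
        using e(1) IVV by (simp add: vmap_mv[OF hI] matrix_vector_mul_assoc)
      moreover have "vmap of_int (\<xi> v* V) = \<beta>"
        using e(2) IVV by (simp add: vmap_vm[OF hI] vector_matrix_mul_assoc)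
      ultimately have q: "(matrix_inv V *v x, \<xi> v* V) \<in> intpts S" unfolding intpts_def using bS by simp
      have "p = (V *v (matrix_inv V *v x), (\<xi> v* V) v* matrix_inv V)"
        using px VV by (simp add: matrix_vector_mul_assoc vector_matrix_mul_assoc)
      then show "p \<in> Tm V (intpts S)" unfolding Tm_def using q by (auto intro: image_eqI)
    qed
    show "Tm V (intpts S) \<subseteq> intpts (Tm (I2 V) S)"
    proof
      fix p assume "p \<in> Tm V (intpts S)"
      then obtain x \<xi> where q: "(x, \<xi>) \<in> intpts S" and p: "p = (V *v x, \<xi> v* matrix_inv V)"
        unfolding Tm_def by auto
      have "(vmap of_int x, vmap of_int \<xi>) \<in> S" using q unfolding intpts_def by simp
      then have "(I2 V *v vmap of_int x, vmap of_int \<xi> v* matrix_inv (I2 V)) \<in> Tm (I2 V) S"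
        unfolding Tm_def by (auto intro: image_eqI)
      then show "p \<in> intpts (Tm (I2 V) S)" unfolding intpts_def p mi
        by (simp add: vmap_mv[OF hI] vmap_vm[OF hI])
    qed
  qed
qed

lemma outer_units: "u * u' = (1::'a::comm_ring_1) \<Longrightarrow> outer (u *s b) (u' *s \<beta>) = outer b \<beta>"
  by (simp add: vec_eq_iff outer_def) (metis mult.assoc mult.left_commute mult_1)

lemma two_q2: "(2::q2) \<noteq> 0" by simp
lemma two_rat: "(2::rat) \<noteq> 0" by simp

locale fin =
  fixes W :: "(z2^'n^'n) set" and mk :: "z2^'n^'n \<Rightarrow> ((z2^'n) \<times> (z2^'n)) set" and U Y :: "z2^'n^'n"
  assumes RW: "refl_group z2_reflection W" and MK: "is_marked z2_reflection W mk"
    and UY: "U ** Y = mat 1" and YU: "Y ** U = mat 1" and conj: "\<forall>w\<in>W. \<exists>C. I2 C = U ** w ** Y"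
begin

definition cf :: "z2^'n^'n \<Rightarrow> int^'n^'n" where "cf w = (SOME C. I2 C = U ** w ** Y)"

lemma cfI: "w \<in> W \<Longrightarrow> I2 (cf w) = U ** w ** Y"
  unfolding cf_def using conj by (metis (mono_tags, lifting) someI_ex)

lemma injI2: "I2 X = I2 Z \<Longrightarrow> X = Z" by (rule map_matrix_inj[OF inj_of_int_z2])

lemma finW: "finite W" and invW: "w \<in> W \<Longrightarrow> invertible w" and oneW: "mat 1 \<in> W"
  and multW: "x \<in> W \<Longrightarrow> y \<in> W \<Longrightarrow> x ** y \<in> W" and invclW: "x \<in> W \<Longrightarrow> matrix_inv x \<in> W"
  and genW: "W = gen_grp {s \<in> W. z2_reflection s}"
  using RW unfolding refl_group_def by auto

lemma genI: "x \<in> gen_grp {s \<in> W. z2_reflection s} \<Longrightarrow> x \<in> W"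
  by (subst genW) assumption
lemma genD: "x \<in> W \<Longrightarrow> x \<in> gen_grp {s \<in> W. z2_reflection s}"
  by (subst (asm) genW) assumption

lemma Uinv: "invertible U" "matrix_inv U = Y"
  using UY YU inv_unique invertible_def by blast+

lemma kmult: "U ** (x ** y) ** Y = (U ** x ** Y) ** (U ** y ** Y)"
proof -
  have "(U ** x ** Y) ** (U ** y ** Y) = U ** x ** (Y ** U) ** y ** Y" by (simp add: matrix_mul_assoc)
  then show ?thesis using YU by (simp add: matrix_mul_assoc)
qed

lemma cf_mult: "x \<in> W \<Longrightarrow> y \<in> W \<Longrightarrow> cf (x ** y) = cf x ** cf y"
  by (rule injI2) (simp add: cfI multW map_matrix_mult[OF hI] kmult)

lemma cf_one: "cf (mat 1) = mat 1"
  by (rule injI2) (simp add: cfI oneW map_matrix_mat[OF hI] UY)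

lemma cf_inv: assumes "x \<in> W"
  shows "cf x ** cf (matrix_inv x) = mat 1" "cf (matrix_inv x) ** cf x = mat 1"
  using cf_mult[OF assms invclW[OF assms]] cf_mult[OF invclW[OF assms] assms]
    inv_props[OF invW[OF assms]] cf_one by auto

lemma cf_invertible: "x \<in> W \<Longrightarrow> invertible (cf x)"
  using cf_inv invertible_def by blast

lemma cf_matrix_inv: "x \<in> W \<Longrightarrow> matrix_inv (cf x) = cf (matrix_inv x)"
  using cf_inv inv_unique by blast

lemma backw: "w \<in> W \<Longrightarrow> Y ** I2 (cf w) ** U = w"
proof -
  assume "w \<in> W"
  then have "Y ** I2 (cf w) ** U = (Y ** U) ** w ** (Y ** U)" by (simp add: cfI matrix_mul_assoc)
  then show ?thesis using YU by simp
qed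

lemma kinv: "w \<in> W \<Longrightarrow> invertible (U ** w ** Y)"
  using cf_invertible map_inv(1)[OF hI] cfI by metis

lemma data:
  assumes sW: "s \<in> W" and sr: "z2_reflection s"
  shows "\<exists>b'' \<beta>'' u u'. u * u' = 1 \<and> Tm U (mk s) = mclass (u *s vmap of_int b'') (u' *s vmap of_int \<beta>'')
     \<and> cf s = mat 1 + outer b'' \<beta>'' \<and> fdot \<beta>'' b'' = -2"
proof -
  have hE: "rhom embQ2" by (rule rhom_embQ2)
  obtain b \<beta> where mkb: "is_marking s b \<beta>" "mk s = mclass b \<beta>"
    using MK sW sr unfolding is_marked_def marking_of_def by blast
  have sb: "s = mat 1 + outer b \<beta>" using mkb(1) by (simp add: is_marking_outer)
  have "AR (J2 s)" using sr unfolding z2_reflection_def by (simp add: refl_conj_AR)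
  moreover have "J2 s = mat 1 + outer (vmap embQ2 b) (vmap embQ2 \<beta>)"
    using sb by (simp add: map_matrix_add[OF hE] map_matrix_mat[OF hE] rhom_1[OF hE] map_outer[OF hE])
  ultimately have "fdot (vmap embQ2 \<beta>) (vmap embQ2 b) = -2" using two_q2 by (rule AR_marking)
  then have "embQ2 (fdot \<beta> b) = embQ2 (-2)"
    by (simp add: fdot_hom[OF hE] rhom_uminus[OF hE] rhom_numeral[OF hE])
  then have fb: "fdot \<beta> b = -2" using inj_embQ2 by (simp add: inj_eq)
  define bt where "bt = U *v b"
  define \<beta>t where "\<beta>t = \<beta> v* Y"
  have Ik: "I2 (cf s) = mat 1 + outer bt \<beta>t"
  proof -
    have "I2 (cf s) = U ** (mat 1 + outer b \<beta>) ** Y" using cfI[OF sW] sb by simp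
    also have "\<dots> = mat 1 + outer bt \<beta>t" unfolding bt_def \<beta>t_def by (rule conj_outer[OF UY])
    finally show ?thesis .
  qed
  have fbt: "fdot \<beta>t bt = -2"
    unfolding bt_def \<beta>t_def fdot_vm by (simp add: matrix_vector_mul_assoc YU fb)
  obtain b'' \<beta>'' u u' where uu: "u * u' = 1" and bt: "bt = u *s vmap of_int b''"
      and \<beta>t: "\<beta>t = u' *s vmap of_int \<beta>''"
    using val_marking[OF Ik fbt] by blast
  have T: "Tm U (mk s) = mclass (u *s vmap of_int b'') (u' *s vmap of_int \<beta>'')"
    unfolding mkb(2) Tm_mclass Uinv(2) bt_def[symmetric] \<beta>t_def[symmetric] bt \<beta>t ..
  have "I2 (cf s) = I2 (mat 1 + outer b'' \<beta>'')"
    unfolding Ik bt \<beta>t outer_units[OF uu]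
    by (simp add: map_matrix_add[OF hI] map_matrix_mat[OF hI] map_outer[OF hI])
  then have C: "cf s = mat 1 + outer b'' \<beta>''" by (rule injI2)
  have "(of_int (fdot \<beta>'' b'') :: z2) = fdot (vmap of_int \<beta>'') (vmap of_int b'')" by (rule fdot_hom[OF hI])
  also have "\<dots> = (u * u') * fdot (vmap of_int \<beta>'') (vmap of_int b'')" using uu by simp
  also have "\<dots> = fdot \<beta>t bt" unfolding bt \<beta>t by (simp add: fdot_scale fdot_scale_l mult_ac)
  also have "\<dots> = of_int (-2)" using fbt by simp
  finally have "fdot \<beta>'' b'' = -2" by (simp only: of_int_eq_iff)
  then show ?thesis using uu T C by blast
qed

lemma refl_i: assumes sW: "s \<in> W" and sr: "z2_reflection s" shows "int_reflection (cf s)"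
proof -
  obtain b'' \<beta>'' where C: "cf s = mat 1 + outer b'' \<beta>''" "fdot \<beta>'' b'' = -2"
    using data[OF sW sr] by blast
  then have "AR (cf s)" unfolding AR_def by blast
  then have "AR (map_matrix (of_int :: int \<Rightarrow> rat) (cf s))" by (rule AR_hom[OF rhom_of_int])
  then have "refl_conj (map_matrix (of_int :: int \<Rightarrow> rat) (cf s))" using two_rat by (rule AR_refl_conj)
  then show ?thesis unfolding int_reflection_def using cf_invertible[OF sW] by blast
qed

lemma refl_ii: assumes sW: "s \<in> W" and ir: "int_reflection (cf s)" shows "z2_reflection s"
proof -
  have hE: "rhom embQ2" by (rule rhom_embQ2)
  have "AR (map_matrix (of_int :: int \<Rightarrow> rat) (cf s))" using ir two_rat
    unfolding int_reflection_def by (simp add: refl_conj_AR)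
  then have "AR (map_matrix (of_rat :: rat \<Rightarrow> q2) (map_matrix of_int (cf s)))" by (rule AR_hom[OF rhom_of_rat])
  moreover have "map_matrix (of_rat :: rat \<Rightarrow> q2) (map_matrix of_int (cf s)) = J2 U ** J2 s ** J2 Y"
  proof -
    have "map_matrix (of_rat :: rat \<Rightarrow> q2) (map_matrix of_int (cf s)) = J2 (I2 (cf s))"
      by (simp add: vec_eq_iff embQ2_of_int)
    then show ?thesis by (simp add: cfI[OF sW] map_matrix_mult[OF hE])
  qed
  ultimately have a: "AR (J2 U ** J2 s ** J2 Y)" by simp
  have JJ: "J2 Y ** J2 U = mat 1" "J2 U ** J2 Y = mat 1"
    using YU UY by (metis map_matrix_mult[OF hE] map_matrix_mat[OF hE] rhom_1[OF hE])+
  have iY: "invertible (J2 Y)" using JJ invertible_def by blast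
  have mY: "matrix_inv (J2 Y) = J2 U" using JJ by (rule inv_unique)
  have "AR (J2 Y ** (J2 U ** J2 s ** J2 Y) ** matrix_inv (J2 Y))" by (rule AR_conj[OF a iY])
  moreover have "J2 Y ** (J2 U ** J2 s ** J2 Y) ** matrix_inv (J2 Y) = J2 s"
  proof -
    have "J2 Y ** (J2 U ** J2 s ** J2 Y) ** J2 U = (J2 Y ** J2 U) ** J2 s ** (J2 Y ** J2 U)"
      by (simp add: matrix_mul_assoc)
    then show ?thesis using JJ mY by simp
  qed
  ultimately have "AR (J2 s)" by simp
  then have "refl_conj (J2 s)" using two_q2 by (rule AR_refl_conj)
  then show ?thesis unfolding z2_reflection_def using invW[OF sW] by blast
qed

definition W2 where "W2 = cf ` W"
definition mk2 where "mk2 C = intpts (Tm U (mk (Y ** I2 C ** U)))"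

lemma mk2_cf: assumes sW: "s \<in> W" and sr: "z2_reflection s"
  shows "\<exists>b'' \<beta>''. mk2 (cf s) = mclass b'' \<beta>'' \<and> cf s = mat 1 + outer b'' \<beta>''
    \<and> Tm U (mk s) = ext_marking (mclass b'' \<beta>'')"
proof -
  obtain b'' \<beta>'' u u' where uu: "u * u' = 1"
    and T: "Tm U (mk s) = mclass (u *s vmap of_int b'') (u' *s vmap of_int \<beta>'')"
    and C: "cf s = mat 1 + outer b'' \<beta>''" and f: "fdot \<beta>'' b'' = -2"
    using data[OF sW sr] by blast
  have T2: "Tm U (mk s) = mclass (vmap of_int b'') (vmap of_int \<beta>'')" using T mclass_unit[OF uu] by simp
  have "mk2 (cf s) = mclass b'' \<beta>''" unfolding mk2_def backw[OF sW] T2 by (rule intpts_mclass[OF f])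
  then show ?thesis using C T2 ext_mclass by metis
qed

lemma refl_group_W2: "refl_group int_reflection W2"
proof -
  have fin: "finite W2" unfolding W2_def using finW by simp
  have inv: "\<forall>w\<in>W2. invertible w" unfolding W2_def using cf_invertible by blast
  have one: "mat 1 \<in> W2" unfolding W2_def using cf_one oneW by (metis image_eqI)
  have mult: "\<forall>x\<in>W2. \<forall>y\<in>W2. x ** y \<in> W2"
  proof (intro ballI)
    fix a c assume "a \<in> W2" "c \<in> W2"
    then obtain x y where xy: "x \<in> W" "y \<in> W" "a = cf x" "c = cf y" unfolding W2_def by blast
    then have "a ** c = cf (x ** y)" using cf_mult by simp
    moreover have "x ** y \<in> W" using xy multW by simp
    ultimately show "a ** c \<in> W2" unfolding W2_def by blast
  qed
  have minv: "\<forall>x\<in>W2. matrix_inv x \<in> W2"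
  proof
    fix a assume "a \<in> W2"
    then obtain x where x: "x \<in> W" "a = cf x" unfolding W2_def by blast
    then have "matrix_inv a = cf (matrix_inv x)" using cf_matrix_inv by simp
    moreover have "matrix_inv x \<in> W" using x invclW by simp
    ultimately show "matrix_inv a \<in> W2" unfolding W2_def by blast
  qed
  have sub1: "x \<in> W2" if "x \<in> gen_grp {s \<in> W2. int_reflection s}" for x
    using that
  proof (induction rule: gen_grp.induct)
    case gen_one then show ?case using one by simp
  next
    case (gen_base s) then show ?case by simp
  next
    case (gen_mult x y) then show ?case using mult by blast
  next
    case (gen_inv x) then show ?case using minv by blast
  qed
  have sub2: "cf x \<in> gen_grp {s \<in> W2. int_reflection s}" if "x \<in> gen_grp {s \<in> W. z2_reflection s}" for x
    using that
  proof (induction rule: gen_grp.induct)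
    case gen_one then show ?case using cf_one gen_grp.gen_one by metis
  next
    case (gen_base s)
    then have "s \<in> W" "z2_reflection s" by auto
    then have "cf s \<in> {s \<in> W2. int_reflection s}" unfolding W2_def using refl_i by auto
    then show ?case by (rule gen_grp.gen_base)
  next
    case (gen_mult x y)
    then have xy: "x \<in> W" "y \<in> W" using genI by auto
    show ?case using gen_grp.gen_mult[OF gen_mult.IH(1) gen_mult.IH(2)] cf_mult[OF xy] by simp
  next
    case (gen_inv x)
    then have xW: "x \<in> W" using genI by auto
    show ?case using gen_grp.gen_inv[OF gen_inv.IH cf_invertible[OF xW]] cf_matrix_inv[OF xW] by simp
  qed
  have "W2 = gen_grp {s \<in> W2. int_reflection s}"
  proof
    show "W2 \<subseteq> gen_grp {s \<in> W2. int_reflection s}"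
    proof
      fix a assume "a \<in> W2"
      then obtain x where x: "x \<in> W" "a = cf x" unfolding W2_def by blast
      show "a \<in> gen_grp {s \<in> W2. int_reflection s}" using sub2[OF genD[OF x(1)]] x(2) by simp
    qed
    show "gen_grp {s \<in> W2. int_reflection s} \<subseteq> W2" using sub1 by blast
  qed
  then show ?thesis unfolding refl_group_def using fin inv one mult minv by blast
qed

lemma marked_W2: "is_marked int_reflection W2 mk2"
proof -
  have a: "marking_of C (mk2 C)" if CW: "C \<in> W2" "int_reflection C" for C
  proof -
    obtain s where s: "s \<in> W" "C = cf s" using CW(1) unfolding W2_def by blast
    then have sr: "z2_reflection s" using refl_ii CW(2) by blast
    obtain b'' \<beta>'' where "mk2 (cf s) = mclass b'' \<beta>''" "cf s = mat 1 + outer b'' \<beta>''"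
      using mk2_cf[OF s(1) sr] by blast
    then show ?thesis unfolding marking_of_def s(2) by (auto simp: is_marking_outer)
  qed
  have b: "(\<lambda>(b, \<beta>). (w *v b, \<beta> v* matrix_inv w)) ` mk2 C = mk2 (w ** C ** matrix_inv w)"
    if wCr: "w \<in> W2" "C \<in> W2" "int_reflection C" for w C
  proof -
    obtain x where x: "x \<in> W" "w = cf x" using wCr(1) unfolding W2_def by blast
    obtain s where s: "s \<in> W" "C = cf s" using wCr(2) unfolding W2_def by blast
    then have sr: "z2_reflection s" using refl_ii wCr(3) by blast
    define t where "t = x ** s ** matrix_inv x"
    have tW: "t \<in> W" unfolding t_def using x s by (simp add: multW invclW)
    have wC: "w ** C ** matrix_inv w = cf t"
      unfolding t_def x s using x(1) s(1) by (simp add: cf_matrix_inv cf_mult multW invclW)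
    have mkt: "mk t = Tm x (mk s)"
      using MK x(1) s(1) sr unfolding is_marked_def Tm_def t_def by auto
    have "(\<lambda>(b, \<beta>). (w *v b, \<beta> v* matrix_inv w)) ` mk2 C = Tm w (mk2 C)" by (simp add: Tm_def)
    also have "\<dots> = intpts (Tm (I2 w) (Tm U (mk s)))"
      unfolding mk2_def s(2) backw[OF s(1)] x(2) by (rule intpts_Tm[OF cf_invertible[OF x(1)], symmetric])
    also have "Tm (I2 w) (Tm U (mk s)) = Tm (I2 w ** U) (mk s)"
      by (rule Tm_Tm[OF _ Uinv(1)]) (simp add: x(2) cfI[OF x(1)] kinv[OF x(1)])
    also have "I2 w ** U = U ** x"
    proof -
      have "I2 w ** U = U ** x ** (Y ** U)" unfolding x(2) cfI[OF x(1)] by (simp add: matrix_mul_assoc)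
      then show ?thesis using YU by simp
    qed
    also have "Tm (U ** x) (mk s) = Tm U (Tm x (mk s))"
      by (rule Tm_Tm[symmetric, OF Uinv(1) invW[OF x(1)]])
    also have "intpts (Tm U (Tm x (mk s))) = mk2 (w ** C ** matrix_inv w)"
      unfolding wC mk2_def backw[OF tW] mkt ..
    finally show ?thesis .
  qed
  show ?thesis unfolding is_marked_def using a b by blast
qed

theorem cox: "coxeter_type W mk"
proof -
  have img: "(\<lambda>w. U ** w ** matrix_inv U) ` W = I2 ` W2"
    unfolding W2_def Uinv(2) image_image using cfI by (auto intro: image_eqI)
  have mkc: "(\<lambda>(b, \<beta>). (U *v b, \<beta> v* matrix_inv U)) ` mk s = ext_marking (mk2 s')"
    if sx: "s \<in> W" "s' \<in> W2" "z2_reflection s" "I2 s' = U ** s ** matrix_inv U" for s s'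
  proof -
    have "s' = cf s" using sx(4) cfI[OF sx(1)] Uinv(2) by (auto intro: injI2)
    obtain b'' \<beta>'' where "mk2 (cf s) = mclass b'' \<beta>''" "Tm U (mk s) = ext_marking (mclass b'' \<beta>'')"
      using mk2_cf[OF sx(1) sx(3)] by blast
    then show ?thesis using \<open>s' = cf s\<close> unfolding Tm_def by simp
  qed
  show ?thesis unfolding coxeter_type_def
    using refl_group_W2 marked_W2 Uinv(1) img mkc by blast
qed

end


theorem lemma7p6:
  fixes W :: "(z2^'n^'n) set"
    and mk :: "z2^'n^'n \<Rightarrow> ((z2^'n) \<times> (z2^'n)) set"
  assumes "refl_group z2_reflection W"
    and "is_marked z2_reflection W mk"
    and "rationally_coxeter W"
  shows "coxeter_type W mk"
proof -
  obtain W' :: "(int^'n^'n) set" and P :: "q2^'n^'n" where P: "invertible P"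
    and img: "(\<lambda>w. P ** map_matrix embQ2 w ** matrix_inv P) ` W = map_matrix (\<lambda>k. embQ2 (of_int k)) ` W'"
    using assms(3) unfolding rationally_coxeter_def by blast
  obtain U Y :: "z2^'n^'n" where UY: "U ** Y = mat 1" "Y ** U = mat 1"
    and cj: "\<forall>w\<in>W. \<exists>C. map_matrix of_int C = U ** w ** Y"
    using construct[OF P img] by blast
  interpret fin W mk U Y
    using assms(1,2) UY cj by unfold_locales auto
  show ?thesis by (rule cox)
qed


end
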